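(* Let $\mathbb{X}$ be a topological space with viable base $\Omega_0$, $\mathbb{D}$ a bc-domain with basis $D_0$, and let $f=\bigsqcup_{i\in I}b_i\chi_{\mathcal{O}_{{\downarrow}W_i}}$ and $g=\bigsqcup_{j\in J}b'_j\chi_{\mathcal{O}_{{\downarrow}W'_j}}$ be elements of $\widehat{\mathbb{B}}$ (finite consistent families with $W_i,W'_j\in\Omega_0$, $b_i,b'_j\in D_0$). Then for each $i\in I$ there is $U_i\in\Omega_0$ with $\mathcal{O}_{{\downarrow}U_i}=g^{-1}(\twoheaduparrow b_i)$, and $f\ll g$ in $[\widehat{\mathbb{X}}_{\Omega_0}\to\mathbb{D}]$ if and only if $W_i\subseteq U_i$ for all $i\in I$.
   Context: A viable base of $\mathbb{X}=(X,\tau_{\mathbb{X}})$ is a family $\Omega_0\subseteq\tau_{\mathbb{X}}$ closed under finite unions and finite intersections (so $\emptyset,X\in\Omega_0$) which is a base of $\tau_{\mathbb{X}}$. ${\downarrow}W=\{U\in\Omega_0:U\subseteq W\}$. $\mathrm{Idl}(\Omega_0)$ is the set of ideals (nonempty, downward closed, directed subsets) of $(\Omega_0,\subseteq)$, ordered by inclusion; a complete lattice. A completely prime filter of a complete lattice $L$ is a nonempty upward closed $F\subseteq L$ closed under binary meets with $\bigvee A\in F\Rightarrow A\cap F\neq\emptyset$. $\widehat{\mathbb{X}}_{\Omega_0}$ is the set of completely prime filters of $\mathrm{Idl}(\Omega_0)$ with topology whose open sets are exactly $\mathcal{O}_I=\{y: I\in y\}$. A bc-domain is a continuous dcpo with least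 element $\bot$ in which bounded subsets have joins; $x\ll y$ is the way-below relation; $\twoheaduparrow b=\{d: b\ll d\}$. $[\widehat{\mathbb{X}}_{\Omega_0}\to\mathbb{D}]$ is the set of functions continuous into the Scott topology of $D$, ordered pointwise. $b\chi_O$ has value $b$ on $O$ and $\bot$ elsewhere; a family $\{b_i\chi_{O_i}\}$ is consistent if every subfamily with nonempty common intersection of the $O_i$ has bounded values $b_i$; $\widehat{\mathbb{B}}$ is the set of pointwise joins of finite consistent families $\{b_i\chi_{\mathcal{O}_{{\downarrow}W_i}}\}$ with $W_i\in\Omega_0$, $b_i\in D_0$. *)

theory Defs
  imports "HOL-Analysis.Analysis"
begin

definition vb_directed :: "'b::order set \<Rightarrow> bool" where
  "vb_directed S \<longleftrightarrow> S \<noteq> {} \<and> (\<forall>x\<in>S. \<forall>y\<in>S. \<exists>z\<in>S. x \<le> z \<and> y \<le> z)"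

definition is_lub_in :: "'b::order set \<Rightarrow> 'b set \<Rightarrow> 'b \<Rightarrow> bool" where
  "is_lub_in P A s \<longleftrightarrow> s \<in> P \<and> (\<forall>a\<in>A. a \<le> s) \<and> (\<forall>u\<in>P. (\<forall>a\<in>A. a \<le> u) \<longrightarrow> s \<le> u)"

definition is_glb_in :: "'b::order set \<Rightarrow> 'b set \<Rightarrow> 'b \<Rightarrow> bool" where
  "is_glb_in P A m \<longleftrightarrow> m \<in> P \<and> (\<forall>a\<in>A. m \<le> a) \<and> (\<forall>u\<in>P. (\<forall>a\<in>A. u \<le> a) \<longrightarrow> u \<le> m)"

definition way_below_in :: "'b::order set \<Rightarrow> 'b \<Rightarrow> 'b \<Rightarrow> bool" where
  "way_below_in P x y \<longleftrightarrow> x \<in> P \<and> y \<in> P \<and>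
     (\<forall>S. S \<subseteq> P \<longrightarrow> vb_directed S \<longrightarrow>
        (\<forall>s. is_lub_in P S s \<longrightarrow> y \<le> s \<longrightarrow> (\<exists>d\<in>S. x \<le> d)))"

definition vb_lub :: "'b::order set \<Rightarrow> 'b" where
  "vb_lub A = (THE s. is_lub_in UNIV A s)"

text \<open>The domain D is the whole type 'd (with least element bot); D0 is the basis.\<close>
definition bc_domain_with_basis :: "'d::order_bot set \<Rightarrow> bool" where
  "bc_domain_with_basis D0 \<longleftrightarrow>
     (\<forall>S::'d set. vb_directed S \<longrightarrow> (\<exists>s. is_lub_in UNIV S s)) \<and>
     (\<forall>x. vb_directed {b \<in> D0. way_below_in UNIV b x} \<and>
          is_lub_in UNIV {b \<in> D0. way_below_in UNIV b x} x) \<and>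
     (\<forall>A::'d set. (\<exists>u. \<forall>a\<in>A. a \<le> u) \<longrightarrow> (\<exists>s. is_lub_in UNIV A s))"

definition scott_open :: "'d::order set \<Rightarrow> bool" where
  "scott_open V \<longleftrightarrow> (\<forall>x\<in>V. \<forall>y. x \<le> y \<longrightarrow> y \<in> V) \<and>
     (\<forall>S. vb_directed S \<longrightarrow> (\<forall>s. is_lub_in UNIV S s \<longrightarrow> s \<in> V \<longrightarrow> S \<inter> V \<noteq> {}))"

definition viable_base :: "'a topology \<Rightarrow> 'a set set \<Rightarrow> bool" where
  "viable_base X \<Omega> \<longleftrightarrow> (\<forall>U\<in>\<Omega>. openin X U) \<and>
     {} \<in> \<Omega> \<and> topspace X \<in> \<Omega> \<and>
     (\<forall>U\<in>\<Omega>. \<forall>V\<in>\<Omega>. U \<union> V \<in> \<Omega> \<and> U \<inter> V \<in> \<Omega>) \<and>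
     (\<forall>U. openin X U \<longrightarrow> (\<exists>F. F \<subseteq> \<Omega> \<and> \<Union>F = U))"

definition vb_down :: "'a set set \<Rightarrow> 'a set \<Rightarrow> 'a set set" where
  "vb_down \<Omega> W = {U \<in> \<Omega>. U \<subseteq> W}"

definition Idl :: "'a set set \<Rightarrow> 'a set set set" where
  "Idl \<Omega> = {I. I \<subseteq> \<Omega> \<and> I \<noteq> {} \<and> (\<forall>U\<in>I. \<forall>V\<in>\<Omega>. V \<subseteq> U \<longrightarrow> V \<in> I) \<and>
                (\<forall>U\<in>I. \<forall>V\<in>I. \<exists>Z\<in>I. U \<subseteq> Z \<and> V \<subseteq> Z)}"

definition compl_prime_filter :: "'b::order set \<Rightarrow> 'b set \<Rightarrow> bool" where
  "compl_prime_filter L F \<longleftrightarrow> F \<subseteq> L \<and> F \<noteq> {} \<and>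
     (\<forall>a\<in>F. \<forall>b\<in>L. a \<le> b \<longrightarrow> b \<in> F) \<and>
     (\<forall>a\<in>F. \<forall>b\<in>F. \<forall>m. is_glb_in L {a, b} m \<longrightarrow> m \<in> F) \<and>
     (\<forall>A. A \<subseteq> L \<longrightarrow> (\<forall>s. is_lub_in L A s \<longrightarrow> s \<in> F \<longrightarrow> A \<inter> F \<noteq> {}))"

definition hat_pts :: "'a set set \<Rightarrow> 'a set set set set" where
  "hat_pts \<Omega> = {F. compl_prime_filter (Idl \<Omega>) F}"

definition hatO :: "'a set set \<Rightarrow> 'a set set \<Rightarrow> 'a set set set set" where
  "hatO \<Omega> I = {y \<in> hat_pts \<Omega>. I \<in> y}"

text \<open>Continuity from \<open>\<widehat>X_\<Omega>\<close> (opens exactly the O_I) into the Scott topology of D.\<close>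
definition hat_cont :: "'a set set \<Rightarrow> ('a set set set \<Rightarrow> 'd::order_bot) \<Rightarrow> bool" where
  "hat_cont \<Omega> f \<longleftrightarrow> (\<forall>V. scott_open V \<longrightarrow>
      (\<exists>I\<in>Idl \<Omega>. {y \<in> hat_pts \<Omega>. f y \<in> V} = hatO \<Omega> I))"

text \<open>The function space [\<open>\<widehat>X_\<Omega>\<close> \<rightarrow> D], functions taken extensionally (value bot
  outside the points), ordered pointwise.\<close>
definition fun_space :: "'a set set \<Rightarrow> ('a set set set \<Rightarrow> 'd::order_bot) set" where
  "fun_space \<Omega> = {f. hat_cont \<Omega> f \<and> (\<forall>y. y \<notin> hat_pts \<Omega> \<longrightarrow> f y = bot)}"

definition consistent_family ::
  "'a set set \<Rightarrow> 'i set \<Rightarrow> ('i \<Rightarrow> 'a set) \<Rightarrow> ('i \<Rightarrow> 'd::order_bot) \<Rightarrow> bool" where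
  "consistent_family \<Omega> I W b \<longleftrightarrow> (\<forall>K. K \<subseteq> I \<longrightarrow>
      (\<Inter>i\<in>K. hatO \<Omega> (vb_down \<Omega> (W i))) \<noteq> {} \<longrightarrow> (\<exists>u. \<forall>i\<in>K. b i \<le> u))"

definition step_join ::
  "'a set set \<Rightarrow> 'i set \<Rightarrow> ('i \<Rightarrow> 'a set) \<Rightarrow> ('i \<Rightarrow> 'd::order_bot) \<Rightarrow> 'a set set set \<Rightarrow> 'd" where
  "step_join \<Omega> I W b = (\<lambda>y. vb_lub {b i | i. i \<in> I \<and> y \<in> hatO \<Omega> (vb_down \<Omega> (W i))})"

end

theory Submission imports Defs begin

lemma vbD:
  assumes "viable_base X \<Omega>"
  shows "{} \<in> \<Omega>" "topspace X \<in> \<Omega>" "\<And>U V. U \<in> \<Omega> \<Longrightarrow> V \<in> \<Omega> \<Longrightarrow> U \<union> V \<in> \<Omega>"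
    "\<And>U V. U \<in> \<Omega> \<Longrightarrow> V \<in> \<Omega> \<Longrightarrow> U \<inter> V \<in> \<Omega>" "\<And>U. U \<in> \<Omega> \<Longrightarrow> U \<subseteq> topspace X"
  using assms unfolding viable_base_def by (auto simp: openin_subset)

lemma vb_Union:
  assumes "viable_base X \<Omega>" "finite F" "F \<subseteq> \<Omega>" shows "\<Union>F \<in> \<Omega>"
  using assms(2,3) by (induction F rule: finite_induct) (auto simp: vbD[OF assms(1)])

lemma vb_Inter:
  assumes "viable_base X \<Omega>" "finite K" "W ` K \<subseteq> \<Omega>" shows "topspace X \<inter> \<Inter>(W ` K) \<in> \<Omega>"
  using assms(2,3)
proof (induction K rule: finite_induct)
  case empty then show ?case using vbD[OF assms(1)] by simp
next
  case (insert x F)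
  have "topspace X \<inter> \<Inter>(W ` insert x F) = W x \<inter> (topspace X \<inter> \<Inter>(W ` F))" by auto
  then show ?case using insert vbD[OF assms(1)] by auto
qed

lemma IdlD: assumes "I \<in> Idl \<Omega>"
  shows "I \<subseteq> \<Omega>" "I \<noteq> {}" "\<And>U V. U \<in> I \<Longrightarrow> V \<in> \<Omega> \<Longrightarrow> V \<subseteq> U \<Longrightarrow> V \<in> I"
    "\<And>U V. U \<in> I \<Longrightarrow> V \<in> I \<Longrightarrow> \<exists>Z\<in>I. U \<subseteq> Z \<and> V \<subseteq> Z"
proof -
  have H: "I \<subseteq> \<Omega> \<and> I \<noteq> {} \<and> (\<forall>U\<in>I. \<forall>V\<in>\<Omega>. V \<subseteq> U \<longrightarrow> V \<in> I) \<and>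
                (\<forall>U\<in>I. \<forall>V\<in>I. \<exists>Z\<in>I. U \<subseteq> Z \<and> V \<subseteq> Z)"
    using assms unfolding Idl_def mem_Collect_eq .
  show "I \<subseteq> \<Omega>" using H by (rule conjunct1)
  show "I \<noteq> {}" using H[THEN conjunct2] by (rule conjunct1)
  have h3: "\<forall>U\<in>I. \<forall>V\<in>\<Omega>. V \<subseteq> U \<longrightarrow> V \<in> I" using H[THEN conjunct2, THEN conjunct2] by (rule conjunct1)
  have h4: "\<forall>U\<in>I. \<forall>V\<in>I. \<exists>Z\<in>I. U \<subseteq> Z \<and> V \<subseteq> Z" using H[THEN conjunct2, THEN conjunct2] by (rule conjunct2)
  show "\<And>U V. U \<in> I \<Longrightarrow> V \<in> \<Omega> \<Longrightarrow> V \<subseteq> U \<Longrightarrow> V \<in> I"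
  proof -
    fix U V assume "U \<in> I" "V \<in> \<Omega>" "V \<subseteq> U"
    with h3 show "V \<in> I" by (elim ballE impE) auto
  qed
  show "\<And>U V. U \<in> I \<Longrightarrow> V \<in> I \<Longrightarrow> \<exists>Z\<in>I. U \<subseteq> Z \<and> V \<subseteq> Z"
  proof -
    fix U V assume "U \<in> I" "V \<in> I"
    with h4 show "\<exists>Z\<in>I. U \<subseteq> Z \<and> V \<subseteq> Z" by (elim ballE) auto
  qed
qed

lemma Idl_empty: assumes "I \<in> Idl \<Omega>" "{} \<in> \<Omega>" shows "{} \<in> I"
proof -
  obtain U where "U \<in> I" using IdlD(2)[OF assms(1)] by blast
  then show ?thesis using IdlD(3)[OF assms(1) _ assms(2)] by blast
qed

lemma Idl_Un: assumes "viable_base X \<Omega>" "I \<in> Idl \<Omega>" "U \<in> I" "V \<in> I" shows "U \<union> V \<in> I"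
proof -
  from IdlD(4)[OF assms(2-4)] obtain Z where "Z \<in> I" "U \<subseteq> Z" "V \<subseteq> Z" by blast
  moreover have "U \<union> V \<in> \<Omega>" using IdlD(1)[OF assms(2)] assms(3,4) vbD(3)[OF assms(1)] by blast
  ultimately show ?thesis using IdlD(3)[OF assms(2)] by blast
qed

lemma Idl_Union: assumes "viable_base X \<Omega>" "I \<in> Idl \<Omega>" "finite F" "F \<subseteq> I" shows "\<Union>F \<in> I"
  using assms(3,4)
  by (induction F rule: finite_induct)
    (auto intro: Idl_empty[OF assms(2)] vbD[OF assms(1)] Idl_Un[OF assms(1,2)])

lemma Idl_sub: "I \<in> Idl \<Omega> \<Longrightarrow> I \<subseteq> \<Omega>" by (rule IdlD(1))
lemma Idl_down: "I \<in> Idl \<Omega> \<Longrightarrow> U \<in> I \<Longrightarrow> V \<in> \<Omega> \<Longrightarrow> V \<subseteq> U \<Longrightarrow> V \<in> I" by (rule IdlD(3))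

lemma down_Idl: assumes "viable_base X \<Omega>" "U \<in> \<Omega>" shows "vb_down \<Omega> U \<in> Idl \<Omega>"
  unfolding Idl_def vb_down_def using vbD[OF assms(1)] assms(2) by auto

lemma Omega_Idl: assumes "viable_base X \<Omega>" shows "\<Omega> \<in> Idl \<Omega>"
  unfolding Idl_def using vbD[OF assms(1)] by blast

lemma down_top: assumes "viable_base X \<Omega>" shows "vb_down \<Omega> (topspace X) = \<Omega>"
proof -
  have "U \<subseteq> topspace X" if "U \<in> \<Omega>" for U using vbD(5)[OF assms that] .
  then show ?thesis unfolding vb_down_def by auto
qed

lemma IdlI:
  assumes "I \<subseteq> \<Omega>" "{} \<in> I" "\<And>U V. U \<in> I \<Longrightarrow> V \<in> \<Omega> \<Longrightarrow> V \<subseteq> U \<Longrightarrow> V \<in> I"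
    "\<And>U V. U \<in> I \<Longrightarrow> V \<in> I \<Longrightarrow> \<exists>Z\<in>I. U \<subseteq> Z \<and> V \<subseteq> Z"
  shows "I \<in> Idl \<Omega>"
proof -
  have "I \<noteq> {}" using assms(2) by blast
  show ?thesis unfolding Idl_def mem_Collect_eq
  proof (intro conjI ballI impI)
  qed (use assms \<open>I \<noteq> {}\<close> in auto)
qed

lemma Idl_Int: assumes "viable_base X \<Omega>" "I \<in> Idl \<Omega>" "J \<in> Idl \<Omega>" shows "I \<inter> J \<in> Idl \<Omega>"
proof (rule IdlI)
  show "I \<inter> J \<subseteq> \<Omega>" using Idl_sub[OF assms(2)] by blast
  show "{} \<in> I \<inter> J" using Idl_empty[OF assms(2)] Idl_empty[OF assms(3)] vbD(1)[OF assms(1)] by blast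
  show "V \<in> I \<inter> J" if "U \<in> I \<inter> J" "V \<in> \<Omega>" "V \<subseteq> U" for U V
    using Idl_down[OF assms(2), of U V] Idl_down[OF assms(3), of U V] that by blast
  show "\<exists>Z\<in>I \<inter> J. U \<subseteq> Z \<and> V \<subseteq> Z" if "U \<in> I \<inter> J" "V \<in> I \<inter> J" for U V
  proof -
    have "U \<union> V \<in> I \<inter> J" using Idl_Un[OF assms(1,2), of U V] Idl_Un[OF assms(1,3), of U V] that by blast
    then show ?thesis by blast
  qed
qed

definition gen :: "'a set set \<Rightarrow> 'a set set set \<Rightarrow> 'a set set" where
  "gen \<Omega> A = {V \<in> \<Omega>. \<exists>F. finite F \<and> F \<subseteq> \<Union>A \<and> V \<subseteq> \<Union>F}"

lemma genI: "V \<in> \<Omega> \<Longrightarrow> finite F \<Longrightarrow> F \<subseteq> \<Union>A \<Longrightarrow> V \<subseteq> \<Union>F \<Longrightarrow> V \<in> gen \<Omega> A"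
  unfolding gen_def by blast

lemma genE: assumes "V \<in> gen \<Omega> A"
  obtains F where "V \<in> \<Omega>" "finite F" "F \<subseteq> \<Union>A" "V \<subseteq> \<Union>F"
  using assms unfolding gen_def by blast

lemma gen_Idl: assumes "viable_base X \<Omega>" "A \<subseteq> Idl \<Omega>" shows "gen \<Omega> A \<in> Idl \<Omega>"
proof (rule IdlI)
  show "gen \<Omega> A \<subseteq> \<Omega>" unfolding gen_def by blast
  show "{} \<in> gen \<Omega> A" by (rule genI[of _ _ "{}"]) (use vbD(1)[OF assms(1)] in auto)
  show "V \<in> gen \<Omega> A" if h: "U \<in> gen \<Omega> A" "V \<in> \<Omega>" "V \<subseteq> U" for U V
  proof -
    obtain F where F: "U \<in> \<Omega>" "finite F" "F \<subseteq> \<Union>A" "U \<subseteq> \<Union>F" using h(1) by (rule genE)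
    show ?thesis by (rule genI[OF h(2) F(2,3)]) (use h(3) F(4) in blast)
  qed
  show "\<exists>Z\<in>gen \<Omega> A. U \<subseteq> Z \<and> V \<subseteq> Z" if h: "U \<in> gen \<Omega> A" "V \<in> gen \<Omega> A" for U V
  proof -
    obtain F where F: "U \<in> \<Omega>" "finite F" "F \<subseteq> \<Union>A" "U \<subseteq> \<Union>F" using h(1) by (rule genE)
    obtain G where G: "V \<in> \<Omega>" "finite G" "G \<subseteq> \<Union>A" "V \<subseteq> \<Union>G" using h(2) by (rule genE)
    have "U \<union> V \<in> \<Omega>" using vbD(3)[OF assms(1) F(1) G(1)] .
    moreover have "finite (F \<union> G)" "F \<union> G \<subseteq> \<Union>A" "U \<union> V \<subseteq> \<Union>(F \<union> G)" using F G by auto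
    ultimately have "U \<union> V \<in> gen \<Omega> A" by (rule genI)
    then show ?thesis by blast
  qed
qed

lemma gen_lub: assumes "viable_base X \<Omega>" "A \<subseteq> Idl \<Omega>" shows "is_lub_in (Idl \<Omega>) A (gen \<Omega> A)"
  unfolding is_lub_in_def
proof (intro conjI ballI impI)
  show "gen \<Omega> A \<in> Idl \<Omega>" by (rule gen_Idl[OF assms])
  fix a assume a: "a \<in> A"
  show "a \<le> gen \<Omega> A"
  proof
    fix V assume V: "V \<in> a"
    have "V \<in> \<Omega>" using V a assms(2) Idl_sub by blast
    moreover have "finite {V}" "{V} \<subseteq> \<Union>A" "V \<subseteq> \<Union>{V}" using V a by auto
    ultimately show "V \<in> gen \<Omega> A" by (rule genI)
  qed
next
  fix u assume u: "u \<in> Idl \<Omega>" "\<forall>a\<in>A. a \<le> u"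
  show "gen \<Omega> A \<le> u"
  proof
    fix V assume "V \<in> gen \<Omega> A"
    then obtain F where F: "V \<in> \<Omega>" "finite F" "F \<subseteq> \<Union>A" "V \<subseteq> \<Union>F" by (rule genE)
    have "F \<subseteq> u" using F(3) u(2) by blast
    then have "\<Union>F \<in> u" using Idl_Union[OF assms(1) u(1) F(2)] by blast
    then show "V \<in> u" using Idl_down[OF u(1) _ F(1,4)] by blast
  qed
qed

lemma ptD: assumes "y \<in> hat_pts \<Omega>"
  shows "y \<subseteq> Idl \<Omega>" "y \<noteq> {}" "\<And>a b. a \<in> y \<Longrightarrow> b \<in> Idl \<Omega> \<Longrightarrow> a \<subseteq> b \<Longrightarrow> b \<in> y"
    "\<And>a b m. a \<in> y \<Longrightarrow> b \<in> y \<Longrightarrow> is_glb_in (Idl \<Omega>) {a, b} m \<Longrightarrow> m \<in> y"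
    "\<And>A s. A \<subseteq> Idl \<Omega> \<Longrightarrow> is_lub_in (Idl \<Omega>) A s \<Longrightarrow> s \<in> y \<Longrightarrow> A \<inter> y \<noteq> {}"
proof -
  have c: "compl_prime_filter (Idl \<Omega>) y" using assms by (simp add: hat_pts_def)
  then have H: "y \<subseteq> Idl \<Omega> \<and> y \<noteq> {} \<and> (\<forall>a\<in>y. \<forall>b\<in>Idl \<Omega>. a \<le> b \<longrightarrow> b \<in> y) \<and>
     (\<forall>a\<in>y. \<forall>b\<in>y. \<forall>m. is_glb_in (Idl \<Omega>) {a, b} m \<longrightarrow> m \<in> y) \<and>
     (\<forall>A. A \<subseteq> Idl \<Omega> \<longrightarrow> (\<forall>s. is_lub_in (Idl \<Omega>) A s \<longrightarrow> s \<in> y \<longrightarrow> A \<inter> y \<noteq> {}))"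
    unfolding compl_prime_filter_def .
  show "y \<subseteq> Idl \<Omega>" using H by (rule conjunct1)
  show "y \<noteq> {}" using H[THEN conjunct2] by (rule conjunct1)
  show "\<And>a b. a \<in> y \<Longrightarrow> b \<in> Idl \<Omega> \<Longrightarrow> a \<subseteq> b \<Longrightarrow> b \<in> y"
  proof -
    fix a b assume "a \<in> y" "b \<in> Idl \<Omega>" "a \<subseteq> b"
    moreover have "\<forall>a\<in>y. \<forall>b\<in>Idl \<Omega>. a \<le> b \<longrightarrow> b \<in> y" using H[THEN conjunct2, THEN conjunct2] by (rule conjunct1)
    ultimately show "b \<in> y" by (elim ballE impE) auto
  qed
  show "\<And>a b m. a \<in> y \<Longrightarrow> b \<in> y \<Longrightarrow> is_glb_in (Idl \<Omega>) {a, b} m \<Longrightarrow> m \<in> y"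
  proof -
    fix a b m assume "a \<in> y" "b \<in> y" "is_glb_in (Idl \<Omega>) {a, b} m"
    moreover have "\<forall>a\<in>y. \<forall>b\<in>y. \<forall>m. is_glb_in (Idl \<Omega>) {a, b} m \<longrightarrow> m \<in> y"
      using H[THEN conjunct2, THEN conjunct2, THEN conjunct2] by (rule conjunct1)
    ultimately show "m \<in> y" by (elim ballE allE impE) auto
  qed
  show "\<And>A s. A \<subseteq> Idl \<Omega> \<Longrightarrow> is_lub_in (Idl \<Omega>) A s \<Longrightarrow> s \<in> y \<Longrightarrow> A \<inter> y \<noteq> {}"
  proof -
    fix A s assume "A \<subseteq> Idl \<Omega>" "is_lub_in (Idl \<Omega>) A s" "s \<in> y"
    moreover have "\<forall>A. A \<subseteq> Idl \<Omega> \<longrightarrow> (\<forall>s. is_lub_in (Idl \<Omega>) A s \<longrightarrow> s \<in> y \<longrightarrow> A \<inter> y \<noteq> {})"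
      using H[THEN conjunct2, THEN conjunct2, THEN conjunct2] by (rule conjunct2)
    ultimately show "A \<inter> y \<noteq> {}" by (elim allE impE) auto
  qed
qed

lemma pt_top: assumes "viable_base X \<Omega>" "y \<in> hat_pts \<Omega>" shows "\<Omega> \<in> y"
proof -
  obtain a where "a \<in> y" using ptD(2)[OF assms(2)] by blast
  then show ?thesis using ptD(1,3)[OF assms(2)] Idl_sub Omega_Idl[OF assms(1)] by blast
qed

lemma pt_Int: assumes "viable_base X \<Omega>" "y \<in> hat_pts \<Omega>" "I \<in> y" "J \<in> y" shows "I \<inter> J \<in> y"
proof -
  have "I \<in> Idl \<Omega>" "J \<in> Idl \<Omega>" using assms ptD(1) by blast+
  then have "is_glb_in (Idl \<Omega>) {I, J} (I \<inter> J)" unfolding is_glb_in_def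
    using Idl_Int[OF assms(1)] by auto
  then show ?thesis using ptD(4)[OF assms(2,3,4)] by blast
qed

lemma pt_gen: assumes "viable_base X \<Omega>" "y \<in> hat_pts \<Omega>" "A \<subseteq> Idl \<Omega>" "gen \<Omega> A \<in> y"
  shows "\<exists>a\<in>A. a \<in> y"
  using ptD(5)[OF assms(2,3) gen_lub[OF assms(1,3)] assms(4)] by blast

lemma hatO_mono: assumes "I \<subseteq> J" "J \<in> Idl \<Omega>" shows "hatO \<Omega> I \<subseteq> hatO \<Omega> J"
  unfolding hatO_def using ptD(3) assms by blast

lemma O_down_mono: assumes "viable_base X \<Omega>" "U \<subseteq> V" "V \<in> \<Omega>"
  shows "hatO \<Omega> (vb_down \<Omega> U) \<subseteq> hatO \<Omega> (vb_down \<Omega> V)"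
  by (rule hatO_mono) (use assms down_Idl[OF assms(1)] in \<open>auto simp: vb_down_def\<close>)

lemma O_down_empty: assumes "viable_base X \<Omega>" shows "hatO \<Omega> (vb_down \<Omega> {}) = {}"
proof -
  have eq: "vb_down \<Omega> {} = gen \<Omega> {}" unfolding vb_down_def gen_def by auto
  have False if "y \<in> hat_pts \<Omega>" "vb_down \<Omega> {} \<in> y" for y
  proof -
    have "\<exists>a\<in>{}. a \<in> y" by (rule pt_gen[OF assms that(1)]) (use that(2) eq in auto)
    then show False by simp
  qed
  then show ?thesis unfolding hatO_def by blast
qed

lemma O_down_Un: assumes "viable_base X \<Omega>" "U \<in> \<Omega>" "V \<in> \<Omega>"
  shows "hatO \<Omega> (vb_down \<Omega> (U \<union> V)) = hatO \<Omega> (vb_down \<Omega> U) \<union> hatO \<Omega> (vb_down \<Omega> V)"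
proof
  have UV: "U \<union> V \<in> \<Omega>" using vbD[OF assms(1)] assms by blast
  have "hatO \<Omega> (vb_down \<Omega> U) \<subseteq> hatO \<Omega> (vb_down \<Omega> (U \<union> V))"
    by (rule O_down_mono[OF assms(1) _ UV]) blast
  moreover have "hatO \<Omega> (vb_down \<Omega> V) \<subseteq> hatO \<Omega> (vb_down \<Omega> (U \<union> V))"
    by (rule O_down_mono[OF assms(1) _ UV]) blast
  ultimately show "hatO \<Omega> (vb_down \<Omega> U) \<union> hatO \<Omega> (vb_down \<Omega> V) \<subseteq> hatO \<Omega> (vb_down \<Omega> (U \<union> V))"
    by (rule Un_least)
  have eq: "vb_down \<Omega> (U \<union> V) = gen \<Omega> {vb_down \<Omega> U, vb_down \<Omega> V}"
  proof
    show "vb_down \<Omega> (U \<union> V) \<subseteq> gen \<Omega> {vb_down \<Omega> U, vb_down \<Omega> V}"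
    proof
      fix Z assume Z: "Z \<in> vb_down \<Omega> (U \<union> V)"
      then have "Z \<inter> U \<in> vb_down \<Omega> U" "Z \<inter> V \<in> vb_down \<Omega> V" "Z \<in> \<Omega>"
        unfolding vb_down_def using vbD(4)[OF assms(1)] assms by auto
      moreover have "Z \<subseteq> \<Union>{Z \<inter> U, Z \<inter> V}" using Z unfolding vb_down_def by auto
      ultimately show "Z \<in> gen \<Omega> {vb_down \<Omega> U, vb_down \<Omega> V}" unfolding gen_def
        by (intro CollectI conjI exI[of _ "{Z \<inter> U, Z \<inter> V}"]) auto
    qed
    show "gen \<Omega> {vb_down \<Omega> U, vb_down \<Omega> V} \<subseteq> vb_down \<Omega> (U \<union> V)"
    proof
      fix Z assume "Z \<in> gen \<Omega> {vb_down \<Omega> U, vb_down \<Omega> V}"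
      then obtain F where F: "Z \<in> \<Omega>" "F \<subseteq> vb_down \<Omega> U \<union> vb_down \<Omega> V" "Z \<subseteq> \<Union>F"
        unfolding gen_def by auto
      have "\<Union>F \<subseteq> U \<union> V"
      proof
        fix x assume "x \<in> \<Union>F"
        then obtain G where "G \<in> F" "x \<in> G" by blast
        then have "G \<subseteq> U \<or> G \<subseteq> V" using F(2) unfolding vb_down_def by blast
        then show "x \<in> U \<union> V" using \<open>x \<in> G\<close> by blast
      qed
      then show "Z \<in> vb_down \<Omega> (U \<union> V)" using F unfolding vb_down_def by blast
    qed
  qed
  show "hatO \<Omega> (vb_down \<Omega> (U \<union> V)) \<subseteq> hatO \<Omega> (vb_down \<Omega> U) \<union> hatO \<Omega> (vb_down \<Omega> V)"
  proof
    fix y assume "y \<in> hatO \<Omega> (vb_down \<Omega> (U \<union> V))"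
    then have y: "y \<in> hat_pts \<Omega>" "gen \<Omega> {vb_down \<Omega> U, vb_down \<Omega> V} \<in> y" unfolding hatO_def eq by auto
    have "{vb_down \<Omega> U, vb_down \<Omega> V} \<subseteq> Idl \<Omega>" using down_Idl[OF assms(1)] assms by blast
    from pt_gen[OF assms(1) y(1) this y(2)] have "vb_down \<Omega> U \<in> y \<or> vb_down \<Omega> V \<in> y" by blast
    then show "y \<in> hatO \<Omega> (vb_down \<Omega> U) \<union> hatO \<Omega> (vb_down \<Omega> V)" using y(1) unfolding hatO_def by blast
  qed
qed

lemma O_down_Int: assumes "viable_base X \<Omega>" "U \<in> \<Omega>" "V \<in> \<Omega>"
  shows "hatO \<Omega> (vb_down \<Omega> (U \<inter> V)) = hatO \<Omega> (vb_down \<Omega> U) \<inter> hatO \<Omega> (vb_down \<Omega> V)"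
proof
  show "hatO \<Omega> (vb_down \<Omega> (U \<inter> V)) \<subseteq> hatO \<Omega> (vb_down \<Omega> U) \<inter> hatO \<Omega> (vb_down \<Omega> V)"
    using O_down_mono[OF assms(1) _ assms(2), of "U \<inter> V"] O_down_mono[OF assms(1) _ assms(3), of "U \<inter> V"] by blast
  have eq: "vb_down \<Omega> (U \<inter> V) = vb_down \<Omega> U \<inter> vb_down \<Omega> V" unfolding vb_down_def by auto
  show "hatO \<Omega> (vb_down \<Omega> U) \<inter> hatO \<Omega> (vb_down \<Omega> V) \<subseteq> hatO \<Omega> (vb_down \<Omega> (U \<inter> V))"
  proof
    fix y assume "y \<in> hatO \<Omega> (vb_down \<Omega> U) \<inter> hatO \<Omega> (vb_down \<Omega> V)"
    then have y: "y \<in> hat_pts \<Omega>" "vb_down \<Omega> U \<in> y" "vb_down \<Omega> V \<in> y" unfolding hatO_def by auto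
    have "vb_down \<Omega> (U \<inter> V) \<in> y" unfolding eq by (rule pt_Int[OF assms(1) y])
    then show "y \<in> hatO \<Omega> (vb_down \<Omega> (U \<inter> V))" using y unfolding hatO_def by simp
  qed
qed

lemma O_down_top: assumes "viable_base X \<Omega>" shows "hatO \<Omega> (vb_down \<Omega> (topspace X)) = hat_pts \<Omega>"
  unfolding hatO_def down_top[OF assms] using pt_top[OF assms] by blast

lemma O_down_Union: assumes "viable_base X \<Omega>" "finite F" "F \<subseteq> \<Omega>"
  shows "hatO \<Omega> (vb_down \<Omega> (\<Union>F)) = (\<Union>V\<in>F. hatO \<Omega> (vb_down \<Omega> V))"
  using assms(2,3)
proof (induction F rule: finite_induct)
  case empty then show ?case using O_down_empty[OF assms(1)] by simp
next
  case (insert x F)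
  then have "x \<in> \<Omega>" "\<Union>F \<in> \<Omega>" using vb_Union[OF assms(1)] by auto
  then have "hatO \<Omega> (vb_down \<Omega> (\<Union>(insert x F))) = hatO \<Omega> (vb_down \<Omega> x) \<union> hatO \<Omega> (vb_down \<Omega> (\<Union>F))"
    using O_down_Un[OF assms(1)] by simp
  then show ?case using insert by simp
qed

lemma O_down_Inter: assumes "viable_base X \<Omega>" "finite K" "W ` K \<subseteq> \<Omega>"
  shows "hatO \<Omega> (vb_down \<Omega> (topspace X \<inter> \<Inter>(W ` K))) = {y \<in> hat_pts \<Omega>. \<forall>j\<in>K. y \<in> hatO \<Omega> (vb_down \<Omega> (W j))}"
  using assms(2,3)
proof (induction K rule: finite_induct)
  case empty then show ?case using O_down_top[OF assms(1)] by simp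
next
  case (insert x F)
  have e: "topspace X \<inter> \<Inter>(W ` insert x F) = W x \<inter> (topspace X \<inter> \<Inter>(W ` F))" by auto
  have "W x \<in> \<Omega>" "W ` F \<subseteq> \<Omega>" using insert by auto
  then have "hatO \<Omega> (vb_down \<Omega> (topspace X \<inter> \<Inter>(W ` insert x F))) =
     hatO \<Omega> (vb_down \<Omega> (W x)) \<inter> hatO \<Omega> (vb_down \<Omega> (topspace X \<inter> \<Inter>(W ` F)))"
    unfolding e using O_down_Int[OF assms(1)] vb_Inter[OF assms(1) insert(1)] by simp
  also have "\<dots> = {y \<in> hat_pts \<Omega>. \<forall>j\<in>insert x F. y \<in> hatO \<Omega> (vb_down \<Omega> (W j))}"
    using insert(3)[OF \<open>W ` F \<subseteq> \<Omega>\<close>] by (auto simp: hatO_def)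
  finally show ?case .
qed

lemma hatO_gen: assumes "viable_base X \<Omega>" "A \<subseteq> Idl \<Omega>"
  shows "hatO \<Omega> (gen \<Omega> A) = \<Union>(hatO \<Omega> ` A)"
proof
  show "hatO \<Omega> (gen \<Omega> A) \<subseteq> \<Union>(hatO \<Omega> ` A)"
  proof
    fix y assume "y \<in> hatO \<Omega> (gen \<Omega> A)"
    then have y: "y \<in> hat_pts \<Omega>" "gen \<Omega> A \<in> y" unfolding hatO_def by auto
    obtain a where "a \<in> A" "a \<in> y" using pt_gen[OF assms(1) y(1) assms(2) y(2)] by blast
    then show "y \<in> \<Union>(hatO \<Omega> ` A)" using y unfolding hatO_def by blast
  qed
  have "a \<subseteq> gen \<Omega> A" if "a \<in> A" for a using gen_lub[OF assms] that unfolding is_lub_in_def by blast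
  then show "\<Union>(hatO \<Omega> ` A) \<subseteq> hatO \<Omega> (gen \<Omega> A)"
    using hatO_mono[OF _ gen_Idl[OF assms]] by blast
qed


definition prime_filt :: "'a set set \<Rightarrow> 'a set set \<Rightarrow> bool" where
  "prime_filt \<Omega> P \<longleftrightarrow> P \<subseteq> \<Omega> \<and> {} \<notin> P \<and> P \<noteq> {} \<and> (\<forall>U\<in>P. \<forall>V\<in>\<Omega>. U \<subseteq> V \<longrightarrow> V \<in> P) \<and>
     (\<forall>U\<in>P. \<forall>V\<in>P. U \<inter> V \<in> P) \<and> (\<forall>U\<in>\<Omega>. \<forall>V\<in>\<Omega>. U \<union> V \<in> P \<longrightarrow> U \<in> P \<or> V \<in> P)"

lemma prime_filtI:
  assumes "P \<subseteq> \<Omega>" "{} \<notin> P" "P \<noteq> {}" "\<And>U V. U \<in> P \<Longrightarrow> V \<in> \<Omega> \<Longrightarrow> U \<subseteq> V \<Longrightarrow> V \<in> P"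
    "\<And>U V. U \<in> P \<Longrightarrow> V \<in> P \<Longrightarrow> U \<inter> V \<in> P"
    "\<And>U V. U \<in> \<Omega> \<Longrightarrow> V \<in> \<Omega> \<Longrightarrow> U \<union> V \<in> P \<Longrightarrow> U \<in> P \<or> V \<in> P"
  shows "prime_filt \<Omega> P"
  unfolding prime_filt_def
proof (intro conjI ballI impI)
  show "P \<subseteq> \<Omega>" by (rule assms(1))
  show "{} \<notin> P" by (rule assms(2))
  show "P \<noteq> {}" by (rule assms(3))
  show "V \<in> P" if "U \<in> P" "V \<in> \<Omega>" "U \<subseteq> V" for U V using assms(4) that .
  show "U \<inter> V \<in> P" if "U \<in> P" "V \<in> P" for U V using assms(5) that .
  show "U \<in> P \<or> V \<in> P" if "U \<in> \<Omega>" "V \<in> \<Omega>" "U \<union> V \<in> P" for U V using assms(6) that .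
qed

lemma prime_filtD: assumes "prime_filt \<Omega> P"
  shows "P \<subseteq> \<Omega>" "{} \<notin> P" "P \<noteq> {}" "\<And>U V. U \<in> P \<Longrightarrow> V \<in> \<Omega> \<Longrightarrow> U \<subseteq> V \<Longrightarrow> V \<in> P"
    "\<And>U V. U \<in> P \<Longrightarrow> V \<in> P \<Longrightarrow> U \<inter> V \<in> P"
    "\<And>U V. U \<in> \<Omega> \<Longrightarrow> V \<in> \<Omega> \<Longrightarrow> U \<union> V \<in> P \<Longrightarrow> U \<in> P \<or> V \<in> P"
proof -
  have H: "P \<subseteq> \<Omega> \<and> {} \<notin> P \<and> P \<noteq> {} \<and> (\<forall>U\<in>P. \<forall>V\<in>\<Omega>. U \<subseteq> V \<longrightarrow> V \<in> P) \<and>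
     (\<forall>U\<in>P. \<forall>V\<in>P. U \<inter> V \<in> P) \<and> (\<forall>U\<in>\<Omega>. \<forall>V\<in>\<Omega>. U \<union> V \<in> P \<longrightarrow> U \<in> P \<or> V \<in> P)"
    using assms unfolding prime_filt_def .
  show "P \<subseteq> \<Omega>" using H by (rule conjunct1)
  show "{} \<notin> P" using H[THEN conjunct2] by (rule conjunct1)
  show "P \<noteq> {}" using H[THEN conjunct2, THEN conjunct2] by (rule conjunct1)
  have h4: "\<forall>U\<in>P. \<forall>V\<in>\<Omega>. U \<subseteq> V \<longrightarrow> V \<in> P" using H[THEN conjunct2, THEN conjunct2, THEN conjunct2] by (rule conjunct1)
  have h5: "\<forall>U\<in>P. \<forall>V\<in>P. U \<inter> V \<in> P" using H[THEN conjunct2, THEN conjunct2, THEN conjunct2, THEN conjunct2] by (rule conjunct1)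
  have h6: "\<forall>U\<in>\<Omega>. \<forall>V\<in>\<Omega>. U \<union> V \<in> P \<longrightarrow> U \<in> P \<or> V \<in> P" using H[THEN conjunct2, THEN conjunct2, THEN conjunct2, THEN conjunct2] by (rule conjunct2)
  show "\<And>U V. U \<in> P \<Longrightarrow> V \<in> \<Omega> \<Longrightarrow> U \<subseteq> V \<Longrightarrow> V \<in> P"
  proof -
    fix U V assume "U \<in> P" "V \<in> \<Omega>" "U \<subseteq> V" with h4 show "V \<in> P" by (elim ballE impE) auto
  qed
  show "\<And>U V. U \<in> P \<Longrightarrow> V \<in> P \<Longrightarrow> U \<inter> V \<in> P"
  proof -
    fix U V assume "U \<in> P" "V \<in> P" with h5 show "U \<inter> V \<in> P" by (elim ballE) auto
  qed
  show "\<And>U V. U \<in> \<Omega> \<Longrightarrow> V \<in> \<Omega> \<Longrightarrow> U \<union> V \<in> P \<Longrightarrow> U \<in> P \<or> V \<in> P"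
  proof -
    fix U V assume "U \<in> \<Omega>" "V \<in> \<Omega>" "U \<union> V \<in> P" with h6 show "U \<in> P \<or> V \<in> P" by (elim ballE impE) auto
  qed
qed

lemma prime_Union: assumes "prime_filt \<Omega> P" "viable_base X \<Omega>" "finite F" "F \<subseteq> \<Omega>" "\<Union>F \<in> P"
  shows "\<exists>U\<in>F. U \<in> P"
  using assms(3,4,5)
proof (induction F rule: finite_induct)
  case empty then show ?case using prime_filtD(2)[OF assms(1)] by simp
next
  case (insert x F)
  have "x \<in> \<Omega>" "F \<subseteq> \<Omega>" using insert(4) by auto
  moreover have "\<Union>F \<in> \<Omega>" using vb_Union[OF assms(2) insert(1)] calculation(2) .
  moreover have "x \<union> \<Union>F \<in> P" using insert(5) by simp
  ultimately have "x \<in> P \<or> \<Union>F \<in> P" using prime_filtD(6)[OF assms(1)] by blast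
  then show ?case using insert(3)[OF \<open>F \<subseteq> \<Omega>\<close>] by blast
qed

definition ptof :: "'a set set \<Rightarrow> 'a set set \<Rightarrow> 'a set set set" where
  "ptof \<Omega> P = {I \<in> Idl \<Omega>. I \<inter> P \<noteq> {}}"

lemma cpfI:
  assumes "F \<subseteq> L" "F \<noteq> {}" "\<And>a b. a \<in> F \<Longrightarrow> b \<in> L \<Longrightarrow> a \<le> b \<Longrightarrow> b \<in> F"
    "\<And>a b m. a \<in> F \<Longrightarrow> b \<in> F \<Longrightarrow> is_glb_in L {a, b} m \<Longrightarrow> m \<in> F"
    "\<And>A s. A \<subseteq> L \<Longrightarrow> is_lub_in L A s \<Longrightarrow> s \<in> F \<Longrightarrow> A \<inter> F \<noteq> {}"
  shows "compl_prime_filter L F"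
  unfolding compl_prime_filter_def
proof (intro conjI ballI impI allI)
  show "F \<subseteq> L" by (rule assms(1))
  show "F \<noteq> {}" by (rule assms(2))
  show "b \<in> F" if "a \<in> F" "b \<in> L" "a \<le> b" for a b using assms(3) that .
  show "m \<in> F" if "a \<in> F" "b \<in> F" "is_glb_in L {a, b} m" for a b m using assms(4) that .
  show "A \<inter> F \<noteq> {}" if "A \<subseteq> L" "is_lub_in L A s" "s \<in> F" for A s using assms(5) that .
qed

lemma ptof_pt: assumes "viable_base X \<Omega>" "prime_filt \<Omega> P" shows "ptof \<Omega> P \<in> hat_pts \<Omega>"
  unfolding hat_pts_def mem_Collect_eq
proof (rule cpfI)
  note pf = prime_filtD[OF assms(2)]
  show "ptof \<Omega> P \<subseteq> Idl \<Omega>" unfolding ptof_def by blast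
  have "\<Omega> \<inter> P \<noteq> {}" using pf(1,3) by blast
  then have "\<Omega> \<in> ptof \<Omega> P" unfolding ptof_def using Omega_Idl[OF assms(1)] by blast
  then show "ptof \<Omega> P \<noteq> {}" by blast
  show "b \<in> ptof \<Omega> P" if "a \<in> ptof \<Omega> P" "b \<in> Idl \<Omega>" "a \<subseteq> b" for a b
    using that unfolding ptof_def by blast
  show "m \<in> ptof \<Omega> P" if h: "a \<in> ptof \<Omega> P" "b \<in> ptof \<Omega> P" "is_glb_in (Idl \<Omega>) {a, b} m" for a b m
  proof -
    have a: "a \<in> Idl \<Omega>" "a \<inter> P \<noteq> {}" and b: "b \<in> Idl \<Omega>" "b \<inter> P \<noteq> {}" using h(1,2) unfolding ptof_def by auto
    obtain V1 where V1: "V1 \<in> a" "V1 \<in> P" using a(2) by blast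
    obtain V2 where V2: "V2 \<in> b" "V2 \<in> P" using b(2) by blast
    have "V1 \<in> \<Omega>" "V2 \<in> \<Omega>" using V1 V2 pf(1) by auto
    then have int: "V1 \<inter> V2 \<in> \<Omega>" using vbD(4)[OF assms(1)] by blast
    have "V1 \<inter> V2 \<in> a" using Idl_down[OF a(1) V1(1) int] by blast
    moreover have "V1 \<inter> V2 \<in> b" using Idl_down[OF b(1) V2(1) int] by blast
    ultimately have "V1 \<inter> V2 \<in> a \<inter> b" by blast
    moreover have m: "m \<in> Idl \<Omega>" "\<forall>u\<in>Idl \<Omega>. (\<forall>x\<in>{a, b}. u \<le> x) \<longrightarrow> u \<le> m"
      using h(3) unfolding is_glb_in_def by blast+
    moreover have "a \<inter> b \<in> Idl \<Omega>" using Idl_Int[OF assms(1) a(1) b(1)] .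
    ultimately have "V1 \<inter> V2 \<in> m" by blast
    moreover have "V1 \<inter> V2 \<in> P" using pf(5)[OF V1(2) V2(2)] .
    ultimately show ?thesis unfolding ptof_def using m(1) by blast
  qed
  show "A \<inter> ptof \<Omega> P \<noteq> {}" if h: "A \<subseteq> Idl \<Omega>" "is_lub_in (Idl \<Omega>) A s" "s \<in> ptof \<Omega> P" for A s
  proof -
    obtain V where V: "V \<in> s" "V \<in> P" using h(3) unfolding ptof_def by blast
    have "gen \<Omega> A \<in> Idl \<Omega>" "\<forall>a\<in>A. a \<le> gen \<Omega> A" using gen_lub[OF assms(1) h(1)] unfolding is_lub_in_def by blast+
    then have "s \<le> gen \<Omega> A" using h(2) unfolding is_lub_in_def by blast
    then have "V \<in> gen \<Omega> A" using V by blast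
    then obtain F where F: "V \<in> \<Omega>" "finite F" "F \<subseteq> \<Union>A" "V \<subseteq> \<Union>F" by (rule genE)
    have FO: "F \<subseteq> \<Omega>" using F(3) h(1) Idl_sub by blast
    have "\<Union>F \<in> \<Omega>" using vb_Union[OF assms(1) F(2) FO] .
    then have "\<Union>F \<in> P" using pf(4)[OF V(2) _ F(4)] by blast
    then obtain U where U: "U \<in> F" "U \<in> P" using prime_Union[OF assms(2,1) F(2) FO] by blast
    then obtain a where a: "a \<in> A" "U \<in> a" using F(3) by blast
    then have "a \<in> ptof \<Omega> P" unfolding ptof_def using h(1) U(2) by blast
    then show ?thesis using a(1) by blast
  qed
qed

lemma point_prime: assumes "viable_base X \<Omega>" "x \<in> W" "W \<in> \<Omega>" shows "prime_filt \<Omega> {V \<in> \<Omega>. x \<in> V}"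
  by (rule prime_filtI) (use assms vbD[OF assms(1)] in auto)

lemma ptof_O_down: assumes "U \<in> \<Omega>" "prime_filt \<Omega> P" "viable_base X \<Omega>"
  shows "ptof \<Omega> P \<in> hatO \<Omega> (vb_down \<Omega> U) \<longleftrightarrow> U \<in> P"
proof
  assume "ptof \<Omega> P \<in> hatO \<Omega> (vb_down \<Omega> U)"
  then have "vb_down \<Omega> U \<inter> P \<noteq> {}" unfolding hatO_def ptof_def by blast
  then obtain V where "V \<in> P" "V \<subseteq> U" unfolding vb_down_def by blast
  then show "U \<in> P" using prime_filtD(4)[OF assms(2)] assms(1) by blast
next
  assume "U \<in> P"
  then have "vb_down \<Omega> U \<inter> P \<noteq> {}" using assms(1) unfolding vb_down_def by blast
  then show "ptof \<Omega> P \<in> hatO \<Omega> (vb_down \<Omega> U)" unfolding hatO_def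
    using ptof_pt[OF assms(3,2)] down_Idl[OF assms(3,1)] unfolding ptof_def by blast
qed

lemma O_down_sub_imp: assumes "viable_base X \<Omega>" "W \<in> \<Omega>" "U \<in> \<Omega>"
  "hatO \<Omega> (vb_down \<Omega> W) \<subseteq> hatO \<Omega> (vb_down \<Omega> U)" shows "W \<subseteq> U"
proof
  fix x assume x: "x \<in> W"
  have P: "prime_filt \<Omega> {V \<in> \<Omega>. x \<in> V}" by (rule point_prime[OF assms(1) x assms(2)])
  have "W \<in> {V \<in> \<Omega>. x \<in> V}" using x assms(2) by blast
  then have "ptof \<Omega> {V \<in> \<Omega>. x \<in> V} \<in> hatO \<Omega> (vb_down \<Omega> W)" using ptof_O_down[OF assms(2) P assms(1)] by blast
  then have "ptof \<Omega> {V \<in> \<Omega>. x \<in> V} \<in> hatO \<Omega> (vb_down \<Omega> U)" using assms(4) by blast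
  then have "U \<in> {V \<in> \<Omega>. x \<in> V}" using ptof_O_down[OF assms(3) P assms(1)] by blast
  then show "x \<in> U" by blast
qed


definition kfilt :: "'a set set \<Rightarrow> 'a set set \<Rightarrow> 'a set \<Rightarrow> 'a set set \<Rightarrow> bool" where
  "kfilt \<Omega> K W F \<longleftrightarrow> F \<subseteq> \<Omega> \<and> W \<in> F \<and> F \<inter> K = {} \<and> (\<forall>U\<in>F. \<forall>V\<in>\<Omega>. U \<subseteq> V \<longrightarrow> V \<in> F) \<and>
     (\<forall>U\<in>F. \<forall>V\<in>F. U \<inter> V \<in> F)"

lemma kfiltI:
  assumes "F \<subseteq> \<Omega>" "W \<in> F" "F \<inter> K = {}" "\<And>U V. U \<in> F \<Longrightarrow> V \<in> \<Omega> \<Longrightarrow> U \<subseteq> V \<Longrightarrow> V \<in> F"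
    "\<And>U V. U \<in> F \<Longrightarrow> V \<in> F \<Longrightarrow> U \<inter> V \<in> F"
  shows "kfilt \<Omega> K W F"
  unfolding kfilt_def
proof (intro conjI ballI impI)
  show "F \<subseteq> \<Omega>" by (rule assms(1))
  show "W \<in> F" by (rule assms(2))
  show "F \<inter> K = {}" by (rule assms(3))
  show "V \<in> F" if "U \<in> F" "V \<in> \<Omega>" "U \<subseteq> V" for U V using assms(4) that .
  show "U \<inter> V \<in> F" if "U \<in> F" "V \<in> F" for U V using assms(5) that .
qed

lemma kfiltD: assumes "kfilt \<Omega> K W F"
  shows "F \<subseteq> \<Omega>" "W \<in> F" "F \<inter> K = {}" "\<And>U V. U \<in> F \<Longrightarrow> V \<in> \<Omega> \<Longrightarrow> U \<subseteq> V \<Longrightarrow> V \<in> F"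
    "\<And>U V. U \<in> F \<Longrightarrow> V \<in> F \<Longrightarrow> U \<inter> V \<in> F"
proof -
  have H: "F \<subseteq> \<Omega> \<and> W \<in> F \<and> F \<inter> K = {} \<and> (\<forall>U\<in>F. \<forall>V\<in>\<Omega>. U \<subseteq> V \<longrightarrow> V \<in> F) \<and>
     (\<forall>U\<in>F. \<forall>V\<in>F. U \<inter> V \<in> F)" using assms unfolding kfilt_def .
  show "F \<subseteq> \<Omega>" using H by (rule conjunct1)
  show "W \<in> F" using H[THEN conjunct2] by (rule conjunct1)
  show "F \<inter> K = {}" using H[THEN conjunct2, THEN conjunct2] by (rule conjunct1)
  have h4: "\<forall>U\<in>F. \<forall>V\<in>\<Omega>. U \<subseteq> V \<longrightarrow> V \<in> F" using H[THEN conjunct2, THEN conjunct2, THEN conjunct2] by (rule conjunct1)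
  have h5: "\<forall>U\<in>F. \<forall>V\<in>F. U \<inter> V \<in> F" using H[THEN conjunct2, THEN conjunct2, THEN conjunct2] by (rule conjunct2)
  show "\<And>U V. U \<in> F \<Longrightarrow> V \<in> \<Omega> \<Longrightarrow> U \<subseteq> V \<Longrightarrow> V \<in> F"
  proof -
    fix U V assume "U \<in> F" "V \<in> \<Omega>" "U \<subseteq> V" with h4 show "V \<in> F" by (elim ballE impE) auto
  qed
  show "\<And>U V. U \<in> F \<Longrightarrow> V \<in> F \<Longrightarrow> U \<inter> V \<in> F"
  proof -
    fix U V assume "U \<in> F" "V \<in> F" with h5 show "U \<inter> V \<in> F" by (elim ballE) auto
  qed
qed

lemma prime_exists:
  assumes vb: "viable_base X \<Omega>" and W: "W \<in> \<Omega>" and K: "K \<in> Idl \<Omega>" and WK: "W \<notin> K"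
  shows "\<exists>P. prime_filt \<Omega> P \<and> W \<in> P \<and> P \<inter> K = {}"
proof -
  define \<A> where "\<A> = {F. kfilt \<Omega> K W F}"
  have F0: "kfilt \<Omega> K W {V \<in> \<Omega>. W \<subseteq> V}"
  proof (rule kfiltI)
    show "{V \<in> \<Omega>. W \<subseteq> V} \<inter> K = {}"
    proof (rule ccontr)
      assume "{V \<in> \<Omega>. W \<subseteq> V} \<inter> K \<noteq> {}"
      then obtain V where "V \<in> K" "W \<subseteq> V" by blast
      then have "W \<in> K" using Idl_down[OF K _ W] by blast
      then show False using WK by blast
    qed
    show "U \<inter> V \<in> {V \<in> \<Omega>. W \<subseteq> V}" if "U \<in> {V \<in> \<Omega>. W \<subseteq> V}" "V \<in> {V \<in> \<Omega>. W \<subseteq> V}" for U V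
      using that vbD(4)[OF vb] by blast
  qed (use W in auto)
  have ne: "\<A> \<noteq> {}" using F0 unfolding \<A>_def by blast
  have ch: "\<Union>C \<in> \<A>" if C: "C \<noteq> {}" "subset.chain \<A> C" for C
  proof -
    have CA: "C \<subseteq> \<A>" and CC: "\<forall>X\<in>C. \<forall>Y\<in>C. X \<subseteq> Y \<or> Y \<subseteq> X" using C(2) unfolding subset_chain_def by blast+
    have kC: "kfilt \<Omega> K W F" if "F \<in> C" for F using CA that unfolding \<A>_def by blast
    have "kfilt \<Omega> K W (\<Union>C)"
    proof (rule kfiltI)
      show "\<Union>C \<subseteq> \<Omega>" using kfiltD(1)[OF kC] by blast
      obtain F where "F \<in> C" using C(1) by blast
      then show "W \<in> \<Union>C" using kfiltD(2)[OF kC] by blast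
      show "\<Union>C \<inter> K = {}" using kfiltD(3)[OF kC] by blast
      show "V \<in> \<Union>C" if hh: "U \<in> \<Union>C" "V \<in> \<Omega>" "U \<subseteq> V" for U V
      proof -
        obtain F where "F \<in> C" "U \<in> F" using hh(1) by blast
        then have "V \<in> F" using kfiltD(4)[OF kC[OF \<open>F \<in> C\<close>]] hh(2,3) by blast
        then show ?thesis using \<open>F \<in> C\<close> by blast
      qed
      show "U \<inter> V \<in> \<Union>C" if hh: "U \<in> \<Union>C" "V \<in> \<Union>C" for U V
      proof -
        obtain F where F: "F \<in> C" "U \<in> F" using hh(1) by blast
        obtain G where G: "G \<in> C" "V \<in> G" using hh(2) by blast
        have "F \<subseteq> G \<or> G \<subseteq> F" using CC F(1) G(1) by blast
        then show ?thesis
        proof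
          assume "F \<subseteq> G"
          then have "U \<inter> V \<in> G" using kfiltD(5)[OF kC[OF G(1)]] F(2) G(2) by blast
          then show ?thesis using G(1) by blast
        next
          assume "G \<subseteq> F"
          then have "U \<inter> V \<in> F" using kfiltD(5)[OF kC[OF F(1)]] F(2) G(2) by blast
          then show ?thesis using F(1) by blast
        qed
      qed
    qed
    then show ?thesis unfolding \<A>_def by blast
  qed
  obtain M where M: "M \<in> \<A>" and Mmax: "\<forall>X\<in>\<A>. M \<subseteq> X \<longrightarrow> X = M"
    using subset_Zorn_nonempty[OF ne ch] by blast
  have kM: "kfilt \<Omega> K W M" using M unfolding \<A>_def by blast
  note mD = kfiltD[OF kM]
  have eK: "{} \<in> K" using Idl_empty[OF K vbD(1)[OF vb]] .
  have extend: "\<exists>m\<in>M. m \<inter> U \<in> K" if U: "U \<in> \<Omega>" "U \<notin> M" for U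
  proof (rule ccontr)
    assume nex: "\<not> (\<exists>m\<in>M. m \<inter> U \<in> K)"
    define MU where "MU = {Z \<in> \<Omega>. \<exists>m\<in>M. m \<inter> U \<subseteq> Z}"
    have "kfilt \<Omega> K W MU"
    proof (rule kfiltI)
      show "MU \<subseteq> \<Omega>" unfolding MU_def by blast
      show "W \<in> MU" unfolding MU_def using W mD(2) by blast
      show "MU \<inter> K = {}"
      proof (rule ccontr)
        assume "MU \<inter> K \<noteq> {}"
        then obtain Z m where Z: "Z \<in> K" "m \<in> M" "m \<inter> U \<subseteq> Z" unfolding MU_def by blast
        have "m \<in> \<Omega>" using mD(1) Z(2) by blast
        then have "m \<inter> U \<in> \<Omega>" using vbD(4)[OF vb _ U(1)] by blast
        then have "m \<inter> U \<in> K" using Idl_down[OF K Z(1) _ Z(3)] by blast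
        then show False using nex Z(2) by blast
      qed
      show "V \<in> MU" if "A \<in> MU" "V \<in> \<Omega>" "A \<subseteq> V" for A V
        using that unfolding MU_def by blast
      show "A \<inter> B \<in> MU" if h: "A \<in> MU" "B \<in> MU" for A B
      proof -
        obtain m1 where m1: "m1 \<in> M" "m1 \<inter> U \<subseteq> A" "A \<in> \<Omega>" using h(1) unfolding MU_def by blast
        obtain m2 where m2: "m2 \<in> M" "m2 \<inter> U \<subseteq> B" "B \<in> \<Omega>" using h(2) unfolding MU_def by blast
        have "m1 \<inter> m2 \<in> M" using mD(5)[OF m1(1) m2(1)] .
        moreover have "(m1 \<inter> m2) \<inter> U \<subseteq> A \<inter> B" using m1(2) m2(2) by blast
        moreover have "A \<inter> B \<in> \<Omega>" using vbD(4)[OF vb m1(3) m2(3)] .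
        ultimately show ?thesis unfolding MU_def by blast
      qed
    qed
    then have "MU \<in> \<A>" unfolding \<A>_def by blast
    moreover have "M \<subseteq> MU"
    proof
      fix m assume "m \<in> M"
      then show "m \<in> MU" unfolding MU_def using mD(1) by blast
    qed
    ultimately have "MU = M" using Mmax by blast
    moreover have "U \<in> MU" unfolding MU_def using U(1) mD(2) by blast
    ultimately show False using U(2) by blast
  qed
  have "prime_filt \<Omega> M"
  proof (rule prime_filtI)
    show "M \<subseteq> \<Omega>" by (rule mD(1))
    show "{} \<notin> M" using mD(3) eK by blast
    show "M \<noteq> {}" using mD(2) by blast
    show "V \<in> M" if "U \<in> M" "V \<in> \<Omega>" "U \<subseteq> V" for U V using mD(4) that .
    show "U \<inter> V \<in> M" if "U \<in> M" "V \<in> M" for U V using mD(5) that .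
    show "U \<in> M \<or> V \<in> M" if h: "U \<in> \<Omega>" "V \<in> \<Omega>" "U \<union> V \<in> M" for U V
    proof (rule ccontr)
      assume "\<not> (U \<in> M \<or> V \<in> M)"
      then have "U \<notin> M" "V \<notin> M" by blast+
      obtain m1 where m1: "m1 \<in> M" "m1 \<inter> U \<in> K" using extend[OF h(1) \<open>U \<notin> M\<close>] by blast
      obtain m2 where m2: "m2 \<in> M" "m2 \<inter> V \<in> K" using extend[OF h(2) \<open>V \<notin> M\<close>] by blast
      have mm: "m1 \<inter> m2 \<inter> (U \<union> V) \<in> M" using mD(5)[OF mD(5)[OF m1(1) m2(1)] h(3)] .
      have un: "(m1 \<inter> U) \<union> (m2 \<inter> V) \<in> K" using Idl_Un[OF vb K m1(2) m2(2)] .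
      have "m1 \<inter> m2 \<inter> (U \<union> V) \<in> \<Omega>" using mm mD(1) by blast
      moreover have "m1 \<inter> m2 \<inter> (U \<union> V) \<subseteq> (m1 \<inter> U) \<union> (m2 \<inter> V)" by blast
      ultimately have "m1 \<inter> m2 \<inter> (U \<union> V) \<in> K" using Idl_down[OF K un] by blast
      then show False using mm mD(3) by blast
    qed
  qed
  then show ?thesis using mD(2,3) by blast
qed


lemma lub_unique: "is_lub_in P A s \<Longrightarrow> is_lub_in P A t \<Longrightarrow> s = t"
  unfolding is_lub_in_def by (meson order.antisym)

lemma vb_lub_eq: "is_lub_in UNIV A s \<Longrightarrow> vb_lub A = s"
  unfolding vb_lub_def by (rule the_equality) (auto intro: lub_unique)

lemma lub_empty: "is_lub_in UNIV {} (bot::'d::order_bot)"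
  unfolding is_lub_in_def by simp

lemma lubD: assumes "is_lub_in P A s"
  shows "s \<in> P" "\<And>a. a \<in> A \<Longrightarrow> a \<le> s" "\<And>u. u \<in> P \<Longrightarrow> (\<And>a. a \<in> A \<Longrightarrow> a \<le> u) \<Longrightarrow> s \<le> u"
  using assms unfolding is_lub_in_def by blast+

lemma lubI: assumes "s \<in> P" "\<And>a. a \<in> A \<Longrightarrow> a \<le> s" "\<And>u. u \<in> P \<Longrightarrow> (\<And>a. a \<in> A \<Longrightarrow> a \<le> u) \<Longrightarrow> s \<le> u"
  shows "is_lub_in P A s"
  unfolding is_lub_in_def using assms by blast

lemma wbD: assumes "way_below_in P x y" "S \<subseteq> P" "vb_directed S" "is_lub_in P S s" "y \<le> s"
  shows "\<exists>d\<in>S. x \<le> d"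
  using assms unfolding way_below_in_def by blast

lemma wb_le: assumes "way_below_in UNIV (a::'d::order) b" shows "a \<le> b"
proof -
  have "vb_directed {b}" unfolding vb_directed_def by blast
  moreover have "is_lub_in UNIV {b} b" unfolding is_lub_in_def by blast
  ultimately show ?thesis using wbD[OF assms _ _ _ order.refl] by blast
qed

lemma wb_mono: assumes "a' \<le> a" "way_below_in UNIV (a::'d::order) b" "b \<le> b'" shows "way_below_in UNIV a' b'"
  unfolding way_below_in_def
proof (intro conjI allI impI)
  fix S s assume h: "S \<subseteq> UNIV" "vb_directed S" "is_lub_in UNIV S s" "b' \<le> s"
  then obtain d where "d \<in> S" "a \<le> d" using wbD[OF assms(2) h(1-3)] assms(3) by (meson order.trans)
  then show "\<exists>d\<in>S. a' \<le> d" using assms(1) by (meson order.trans)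
qed auto

lemma wb_bot: "way_below_in UNIV (bot::'d::order_bot) x"
  unfolding way_below_in_def vb_directed_def by auto

lemma dir_fin: assumes "vb_directed (S::'d::order set)" "finite F" "F \<subseteq> S" shows "\<exists>d\<in>S. \<forall>e\<in>F. e \<le> d"
  using assms(2,3)
proof (induction F rule: finite_induct)
  case empty then show ?case using assms(1) unfolding vb_directed_def by blast
next
  case (insert x F)
  then obtain d where d: "d \<in> S" "\<forall>e\<in>F. e \<le> d" by blast
  have "x \<in> S" using insert(4) by blast
  then obtain z where "z \<in> S" "x \<le> z" "d \<le> z" using assms(1) d(1) unfolding vb_directed_def by blast
  then have "\<forall>e\<in>insert x F. e \<le> z" using d(2) by (auto intro: order.trans)
  then show ?case using \<open>z \<in> S\<close> by blast
qed

lemma wb_fin_lub: assumes "finite A" "\<And>a. a \<in> A \<Longrightarrow> way_below_in UNIV a (x::'d::order)" "is_lub_in UNIV A l"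
  shows "way_below_in UNIV l x"
  unfolding way_below_in_def
proof (intro conjI allI impI)
  fix S s assume h: "S \<subseteq> UNIV" "vb_directed S" "is_lub_in UNIV S s" "x \<le> s"
  have "\<forall>a\<in>A. \<exists>d\<in>S. a \<le> d" using wbD[OF assms(2) h] by blast
  then obtain f where f: "\<And>a. a \<in> A \<Longrightarrow> f a \<in> S \<and> a \<le> f a" by metis
  have "finite (f ` A)" "f ` A \<subseteq> S" using assms(1) f by auto
  then obtain d where d: "d \<in> S" "\<forall>e\<in>f ` A. e \<le> d" using dir_fin[OF h(2)] by blast
  have "l \<le> d" using lubD(3)[OF assms(3)] f d(2) by (meson UNIV_I image_eqI order.trans)
  then show "\<exists>d\<in>S. l \<le> d" using d(1) by blast
qed auto

lemma bcD:
  assumes "bc_domain_with_basis (D0::'d::order_bot set)"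
  shows "\<And>S::'d set. vb_directed S \<Longrightarrow> \<exists>s. is_lub_in UNIV S s"
    "\<And>x. vb_directed {b \<in> D0. way_below_in UNIV b x}"
    "\<And>x. is_lub_in UNIV {b \<in> D0. way_below_in UNIV b x} x"
    "\<And>(A::'d set) u. (\<And>a. a \<in> A \<Longrightarrow> a \<le> u) \<Longrightarrow> \<exists>s. is_lub_in UNIV A s"
proof -
  have H: "(\<forall>S::'d set. vb_directed S \<longrightarrow> (\<exists>s. is_lub_in UNIV S s)) \<and>
     (\<forall>x. vb_directed {b \<in> D0. way_below_in UNIV b x} \<and>
          is_lub_in UNIV {b \<in> D0. way_below_in UNIV b x} x) \<and>
     (\<forall>A::'d set. (\<exists>u. \<forall>a\<in>A. a \<le> u) \<longrightarrow> (\<exists>s. is_lub_in UNIV A s))"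
    using assms unfolding bc_domain_with_basis_def .
  have h1: "\<forall>S::'d set. vb_directed S \<longrightarrow> (\<exists>s. is_lub_in UNIV S s)" using H by (rule conjunct1)
  have h2: "\<forall>x. vb_directed {b \<in> D0. way_below_in UNIV b x} \<and> is_lub_in UNIV {b \<in> D0. way_below_in UNIV b x} x"
    using H[THEN conjunct2] by (rule conjunct1)
  have h3: "\<forall>A::'d set. (\<exists>u. \<forall>a\<in>A. a \<le> u) \<longrightarrow> (\<exists>s. is_lub_in UNIV A s)"
    using H[THEN conjunct2] by (rule conjunct2)
  show "\<And>S::'d set. vb_directed S \<Longrightarrow> \<exists>s. is_lub_in UNIV S s" using h1 by blast
  show "\<And>x. vb_directed {b \<in> D0. way_below_in UNIV b x}" using h2 by (elim allE conjE)
  show "\<And>x. is_lub_in UNIV {b \<in> D0. way_below_in UNIV b x} x" using h2 by (elim allE conjE)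
  show "\<And>(A::'d set) u. (\<And>a. a \<in> A \<Longrightarrow> a \<le> u) \<Longrightarrow> \<exists>s. is_lub_in UNIV A s"
  proof -
    fix A :: "'d set" and u assume "\<And>a. a \<in> A \<Longrightarrow> a \<le> u"
    then have "\<exists>u. \<forall>a\<in>A. a \<le> u" by blast
    then show "\<exists>s. is_lub_in UNIV A s" using h3 by blast
  qed
qed

lemma interp: assumes bc: "bc_domain_with_basis (D0::'d::order_bot set)" and ax: "way_below_in UNIV a (x::'d)"
  shows "\<exists>c. way_below_in UNIV a c \<and> way_below_in UNIV c x"
proof -
  define Ap where "Ap y = {b \<in> D0. way_below_in UNIV b y}" for y
  have Apd: "vb_directed (Ap y)" "is_lub_in UNIV (Ap y) y" for y unfolding Ap_def using bcD(2,3)[OF bc] by blast+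
  define S' where "S' = (\<Union>d\<in>Ap x. Ap d)"
  have dir: "vb_directed S'" unfolding vb_directed_def
  proof (intro conjI ballI)
    obtain d where d: "d \<in> Ap x" using Apd(1)[of x] unfolding vb_directed_def by blast
    obtain c where "c \<in> Ap d" using Apd(1)[of d] unfolding vb_directed_def by blast
    then show "S' \<noteq> {}" unfolding S'_def using d by blast
  next
    fix c1 c2 assume "c1 \<in> S'" "c2 \<in> S'"
    then obtain d1 d2 where d: "d1 \<in> Ap x" "c1 \<in> Ap d1" "d2 \<in> Ap x" "c2 \<in> Ap d2" unfolding S'_def by blast
    obtain d3 where d3: "d3 \<in> Ap x" "d1 \<le> d3" "d2 \<le> d3" using Apd(1)[of x] d(1,3) unfolding vb_directed_def by blast
    have "way_below_in UNIV c1 d3" using wb_mono[OF order.refl _ d3(2)] d(2) unfolding Ap_def by blast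
    then obtain e1 where e1: "e1 \<in> Ap d3" "c1 \<le> e1" using wbD[OF _ _ Apd(1) Apd(2) order.refl] by blast
    have "way_below_in UNIV c2 d3" using wb_mono[OF order.refl _ d3(3)] d(4) unfolding Ap_def by blast
    then obtain e2 where e2: "e2 \<in> Ap d3" "c2 \<le> e2" using wbD[OF _ _ Apd(1) Apd(2) order.refl] by blast
    obtain e3 where e3: "e3 \<in> Ap d3" "e1 \<le> e3" "e2 \<le> e3" using Apd(1)[of d3] e1(1) e2(1) unfolding vb_directed_def by blast
    have "e3 \<in> S'" unfolding S'_def using d3(1) e3(1) by blast
    moreover have "c1 \<le> e3" "c2 \<le> e3" using e1(2) e2(2) e3(2,3) by (meson order.trans)+
    ultimately show "\<exists>z\<in>S'. c1 \<le> z \<and> c2 \<le> z" by blast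
  qed
  obtain s' where s': "is_lub_in UNIV S' s'" using bcD(1)[OF bc dir] by blast
  have "d \<le> s'" if "d \<in> Ap x" for d
  proof -
    have "Ap d \<subseteq> S'" unfolding S'_def using that by blast
    then show ?thesis using lubD(3)[OF Apd(2)[of d], of s'] lubD(2)[OF s'] by blast
  qed
  then have "x \<le> s'" using lubD(3)[OF Apd(2)[of x], of s'] by blast
  then obtain c where c: "c \<in> S'" "a \<le> c" using wbD[OF ax _ dir s'] by blast
  then obtain d where d: "d \<in> Ap x" "c \<in> Ap d" unfolding S'_def by blast
  have "way_below_in UNIV a d" using wb_mono[OF c(2) _ order.refl] d(2) unfolding Ap_def by blast
  moreover have "way_below_in UNIV d x" using d(1) unfolding Ap_def by blast
  ultimately show ?thesis by blast
qed

lemma wb_open: assumes bc: "bc_domain_with_basis (D0::'d::order_bot set)"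
  shows "scott_open {d. way_below_in UNIV (b::'d) d}"
  unfolding scott_open_def
proof (intro conjI ballI allI impI)
  fix x y assume "x \<in> {d. way_below_in UNIV b d}" "x \<le> y"
  then show "y \<in> {d. way_below_in UNIV b d}" using wb_mono[OF order.refl] by blast
next
  fix S s assume h: "vb_directed S" "is_lub_in UNIV S s" "s \<in> {d. way_below_in UNIV b d}"
  have "way_below_in UNIV b s" using h(3) by simp
  then obtain c where c: "way_below_in UNIV b c" "way_below_in UNIV c s" using interp[OF bc] by blast
  obtain d where "d \<in> S" "c \<le> d" using wbD[OF c(2) _ h(1,2) order.refl] by blast
  then show "S \<inter> {d. way_below_in UNIV b d} \<noteq> {}" using wb_mono[OF order.refl c(1)] by blast
qed


definition act :: "'a set set \<Rightarrow> 'i set \<Rightarrow> ('i \<Rightarrow> 'a set) \<Rightarrow> 'a set set set \<Rightarrow> 'i set" where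
  "act \<Omega> I W y = {i \<in> I. y \<in> hatO \<Omega> (vb_down \<Omega> (W i))}"

lemma step_eq: "step_join \<Omega> I W b y = vb_lub (b ` act \<Omega> I W y)"
proof -
  have "{b i | i. i \<in> I \<and> y \<in> hatO \<Omega> (vb_down \<Omega> (W i))} = b ` act \<Omega> I W y"
    unfolding act_def by blast
  then show ?thesis unfolding step_join_def by simp
qed

lemma cons_bound: assumes "consistent_family \<Omega> I W b" "K \<subseteq> I" "\<And>i. i \<in> K \<Longrightarrow> y \<in> hatO \<Omega> (vb_down \<Omega> (W i))"
  shows "\<exists>u. \<forall>i\<in>K. b i \<le> u"
proof -
  have "(\<Inter>i\<in>K. hatO \<Omega> (vb_down \<Omega> (W i))) \<noteq> {}" using assms(3) by blast
  then show ?thesis using assms(1,2) unfolding consistent_family_def by blast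
qed

lemma sub_lub: assumes bc: "bc_domain_with_basis (D0::'d::order_bot set)"
  and cons: "consistent_family \<Omega> I W (b::'i \<Rightarrow> 'd)" and K: "K \<subseteq> I" "\<And>i. i \<in> K \<Longrightarrow> y \<in> hatO \<Omega> (vb_down \<Omega> (W i))"
  shows "is_lub_in UNIV (b ` K) (vb_lub (b ` K))"
proof -
  obtain u where "\<forall>i\<in>K. b i \<le> u" using cons_bound[OF cons K] by blast
  then obtain s where "is_lub_in UNIV (b ` K) s" using bcD(4)[OF bc, of "b ` K" u] by blast
  then show ?thesis using vb_lub_eq by metis
qed

lemma step_lub: assumes bc: "bc_domain_with_basis (D0::'d::order_bot set)"
  and cons: "consistent_family \<Omega> I W (b::'i \<Rightarrow> 'd)"
  shows "is_lub_in UNIV (b ` act \<Omega> I W y) (step_join \<Omega> I W b y)"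
  unfolding step_eq by (rule sub_lub[OF bc cons]) (auto simp: act_def)

lemma step_ge: assumes bc: "bc_domain_with_basis (D0::'d::order_bot set)"
  and cons: "consistent_family \<Omega> I W (b::'i \<Rightarrow> 'd)" and "i \<in> I" "y \<in> hatO \<Omega> (vb_down \<Omega> (W i))"
  shows "b i \<le> step_join \<Omega> I W b y"
proof -
  have "i \<in> act \<Omega> I W y" using assms(3,4) unfolding act_def by blast
  then show ?thesis using lubD(2)[OF step_lub[OF bc cons]] by blast
qed

lemma step_out: assumes "y \<notin> hat_pts \<Omega>" shows "step_join \<Omega> I W (b::'i \<Rightarrow> 'd::order_bot) y = bot"
proof -
  have "act \<Omega> I W y = {}" using assms unfolding act_def hatO_def by blast
  then show ?thesis unfolding step_eq using vb_lub_eq[OF lub_empty] by simp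
qed

lemma step_preimage:
  assumes vb: "viable_base X \<Omega>" and bc: "bc_domain_with_basis (D0::'d::order_bot set)"
    and fin: "finite I" and WI: "\<forall>i\<in>I. W i \<in> \<Omega>" and cons: "consistent_family \<Omega> I W (b::'i \<Rightarrow> 'd)"
    and upV: "\<forall>x\<in>V. \<forall>z. x \<le> z \<longrightarrow> z \<in> V"
  shows "\<exists>U\<in>\<Omega>. {y \<in> hat_pts \<Omega>. step_join \<Omega> I W b y \<in> V} = hatO \<Omega> (vb_down \<Omega> U)"
proof -
  have up: "z \<in> V" if "x \<in> V" "x \<le> z" for x z using upV that by blast
  define Good where "Good = {K. K \<subseteq> I \<and> vb_lub (b ` K) \<in> V}"
  define inter where "inter K = topspace X \<inter> \<Inter>(W ` K)" for K
  define U where "U = \<Union>(inter ` Good)"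
  have finG: "finite Good" unfolding Good_def using fin by auto
  have interO: "inter K \<in> \<Omega>" if "K \<in> Good" for K
  proof -
    have "K \<subseteq> I" using that unfolding Good_def by blast
    then have "finite K" "W ` K \<subseteq> \<Omega>" using fin WI finite_subset by auto
    then show ?thesis unfolding inter_def by (rule vb_Inter[OF vb])
  qed
  have UO: "U \<in> \<Omega>" unfolding U_def by (rule vb_Union[OF vb]) (use finG interO in auto)
  have regK: "hatO \<Omega> (vb_down \<Omega> (inter K)) = {y \<in> hat_pts \<Omega>. \<forall>j\<in>K. y \<in> hatO \<Omega> (vb_down \<Omega> (W j))}"
    if "K \<in> Good" for K
  proof -
    have "K \<subseteq> I" using that unfolding Good_def by blast
    then have "finite K" "W ` K \<subseteq> \<Omega>" using fin WI finite_subset by auto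
    then show ?thesis unfolding inter_def by (rule O_down_Inter[OF vb])
  qed
  have "hatO \<Omega> (vb_down \<Omega> U) = (\<Union>V\<in>inter ` Good. hatO \<Omega> (vb_down \<Omega> V))"
    unfolding U_def by (rule O_down_Union[OF vb]) (use finG interO in auto)
  also have "\<dots> = (\<Union>K\<in>Good. {y \<in> hat_pts \<Omega>. \<forall>j\<in>K. y \<in> hatO \<Omega> (vb_down \<Omega> (W j))})"
    using regK by auto
  also have "\<dots> = {y \<in> hat_pts \<Omega>. step_join \<Omega> I W b y \<in> V}"
  proof
    show "(\<Union>K\<in>Good. {y \<in> hat_pts \<Omega>. \<forall>j\<in>K. y \<in> hatO \<Omega> (vb_down \<Omega> (W j))}) \<subseteq> {y \<in> hat_pts \<Omega>. step_join \<Omega> I W b y \<in> V}"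
    proof
      fix y assume "y \<in> (\<Union>K\<in>Good. {y \<in> hat_pts \<Omega>. \<forall>j\<in>K. y \<in> hatO \<Omega> (vb_down \<Omega> (W j))})"
      then obtain K where K: "K \<in> Good" "y \<in> hat_pts \<Omega>" "\<And>j. j \<in> K \<Longrightarrow> y \<in> hatO \<Omega> (vb_down \<Omega> (W j))" by blast
      have KI: "K \<subseteq> I" "vb_lub (b ` K) \<in> V" using K(1) unfolding Good_def by blast+
      have l: "is_lub_in UNIV (b ` K) (vb_lub (b ` K))" by (rule sub_lub[OF bc cons KI(1) K(3)])
      have "\<And>a. a \<in> b ` K \<Longrightarrow> a \<le> step_join \<Omega> I W b y" using step_ge[OF bc cons] KI(1) K(3) by blast
      then have "vb_lub (b ` K) \<le> step_join \<Omega> I W b y" using lubD(3)[OF l] by blast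
      then show "y \<in> {y \<in> hat_pts \<Omega>. step_join \<Omega> I W b y \<in> V}" using up[OF KI(2)] K(2) by blast
    qed
    show "{y \<in> hat_pts \<Omega>. step_join \<Omega> I W b y \<in> V} \<subseteq> (\<Union>K\<in>Good. {y \<in> hat_pts \<Omega>. \<forall>j\<in>K. y \<in> hatO \<Omega> (vb_down \<Omega> (W j))})"
    proof
      fix y assume y: "y \<in> {y \<in> hat_pts \<Omega>. step_join \<Omega> I W b y \<in> V}"
      have "act \<Omega> I W y \<in> Good" unfolding Good_def using y unfolding step_eq act_def by auto
      moreover have "\<forall>j\<in>act \<Omega> I W y. y \<in> hatO \<Omega> (vb_down \<Omega> (W j))" unfolding act_def by blast
      ultimately show "y \<in> (\<Union>K\<in>Good. {y \<in> hat_pts \<Omega>. \<forall>j\<in>K. y \<in> hatO \<Omega> (vb_down \<Omega> (W j))})"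
        using y by blast
    qed
  qed
  finally show ?thesis using UO by metis
qed

lemma step_fs:
  assumes vb: "viable_base X \<Omega>" and bc: "bc_domain_with_basis (D0::'d::order_bot set)"
    and fin: "finite I" and WI: "\<forall>i\<in>I. W i \<in> \<Omega>" and cons: "consistent_family \<Omega> I W (b::'i \<Rightarrow> 'd)"
  shows "step_join \<Omega> I W b \<in> fun_space \<Omega>"
  unfolding fun_space_def mem_Collect_eq
proof (intro conjI allI impI)
  show "step_join \<Omega> I W b y = bot" if "y \<notin> hat_pts \<Omega>" for y using step_out[OF that] .
  show "hat_cont \<Omega> (step_join \<Omega> I W b)" unfolding hat_cont_def
  proof (intro allI impI)
    fix V :: "'d set" assume "scott_open V"
    then have up: "\<forall>x\<in>V. \<forall>z. x \<le> z \<longrightarrow> z \<in> V" unfolding scott_open_def by blast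
    obtain U where "U \<in> \<Omega>" "{y \<in> hat_pts \<Omega>. step_join \<Omega> I W b y \<in> V} = hatO \<Omega> (vb_down \<Omega> U)"
      using step_preimage[OF vb bc fin WI cons up] by blast
    then show "\<exists>J\<in>Idl \<Omega>. {y \<in> hat_pts \<Omega>. step_join \<Omega> I W b y \<in> V} = hatO \<Omega> J"
      using down_Idl[OF vb] by blast
  qed
qed


lemma step_mono: assumes bc: "bc_domain_with_basis (D0::'d::order_bot set)"
  and cons: "consistent_family \<Omega> I W (c::'i \<Rightarrow> 'd)" and cons': "consistent_family \<Omega> I W c'"
  and le: "\<forall>j\<in>I. c j \<le> c' j"
  shows "step_join \<Omega> I W c \<le> step_join \<Omega> I W c'"
proof (rule le_funI)
  fix y
  show "step_join \<Omega> I W c y \<le> step_join \<Omega> I W c' y"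
  proof (cases "y \<in> hat_pts \<Omega>")
    case False then show ?thesis using step_out[OF False, of I W c] step_out[OF False, of I W c'] by simp
  next
    case True
    have "a \<le> step_join \<Omega> I W c' y" if ha: "a \<in> c ` act \<Omega> I W y" for a
    proof -
      obtain j where j: "j \<in> I" "y \<in> hatO \<Omega> (vb_down \<Omega> (W j))" "a = c j" using ha unfolding act_def by blast
      have "c' j \<le> step_join \<Omega> I W c' y" by (rule step_ge[OF bc cons' j(1,2)])
      then show ?thesis using le j by (meson order.trans)
    qed
    then show ?thesis using lubD(3)[OF step_lub[OF bc cons]] by blast
  qed
qed

lemma cons_mono: assumes "consistent_family \<Omega> I W b" "\<forall>j\<in>I. c j \<le> b j"
  shows "consistent_family \<Omega> I W (c::'i \<Rightarrow> 'd::order_bot)"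
  unfolding consistent_family_def
proof (intro allI impI)
  fix K assume K: "K \<subseteq> I" "(\<Inter>i\<in>K. hatO \<Omega> (vb_down \<Omega> (W i))) \<noteq> {}"
  then obtain u where "\<forall>i\<in>K. b i \<le> u" using assms(1) unfolding consistent_family_def by blast
  then have "\<forall>i\<in>K. c i \<le> u" using assms(2) K(1) by (meson order.trans subsetD)
  then show "\<exists>u. \<forall>i\<in>K. c i \<le> u" by blast
qed

lemma ptwise:
  assumes vb: "viable_base X \<Omega>" and bc: "bc_domain_with_basis (D0::'d::order_bot set)"
    and S: "S \<subseteq> fun_space \<Omega>" and dir: "vb_directed (S :: ('a set set set \<Rightarrow> 'd) set)"
  shows "\<exists>p. (\<forall>y. vb_directed ((\<lambda>h. h y) ` S) \<and> is_lub_in UNIV ((\<lambda>h. h y) ` S) (p y)) \<and> p \<in> fun_space \<Omega>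
     \<and> (\<forall>s. is_lub_in (fun_space \<Omega>) S s \<longrightarrow> s = p)"
proof -
  define p where "p y = vb_lub ((\<lambda>h. h y) ` S)" for y
  have Sne: "S \<noteq> {}" using dir unfolding vb_directed_def by blast
  have dirY: "vb_directed ((\<lambda>h. h y) ` S)" for y
    unfolding vb_directed_def
  proof (intro conjI ballI)
    show "(\<lambda>h. h y) ` S \<noteq> {}" using Sne by blast
    fix a b assume "a \<in> (\<lambda>h. h y) ` S" "b \<in> (\<lambda>h. h y) ` S"
    then obtain h1 h2 where h: "h1 \<in> S" "h2 \<in> S" "a = h1 y" "b = h2 y" by blast
    then obtain h3 where "h3 \<in> S" "h1 \<le> h3" "h2 \<le> h3" using dir unfolding vb_directed_def by blast
    then show "\<exists>z\<in>(\<lambda>h. h y) ` S. a \<le> z \<and> b \<le> z" using h by (auto dest: le_funD)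
  qed
  have lubY: "is_lub_in UNIV ((\<lambda>h. h y) ` S) (p y)" for y
  proof -
    obtain t where "is_lub_in UNIV ((\<lambda>h. h y) ` S) t" using bcD(1)[OF bc dirY] by blast
    then show ?thesis unfolding p_def using vb_lub_eq by metis
  qed
  have pfs: "p \<in> fun_space \<Omega>"
    unfolding fun_space_def mem_Collect_eq
  proof (intro conjI allI impI)
    fix y assume y: "y \<notin> hat_pts \<Omega>"
    have "h y = bot" if "h \<in> S" for h using S that y unfolding fun_space_def by blast
    hence hb: "\<And>h. h \<in> S \<Longrightarrow> h y = bot" .
    obtain h0 where h0: "h0 \<in> S" using Sne by blast
    have "bot \<in> (\<lambda>h. h y) ` S" using hb[OF h0] h0 by (metis image_eqI)
    moreover have "(\<lambda>h. h y) ` S \<subseteq> {bot}" using hb by auto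
    ultimately have "(\<lambda>h. h y) ` S = {bot}" by blast
    then have "is_lub_in UNIV ((\<lambda>h. h y) ` S) bot" unfolding is_lub_in_def by auto
    then show "p y = bot" using lub_unique[OF lubY] by metis
  next
    show "hat_cont \<Omega> p" unfolding hat_cont_def
    proof (intro allI impI)
      fix V :: "'d set" assume so: "scott_open V"
      have up: "\<And>x z. x \<in> V \<Longrightarrow> x \<le> z \<Longrightarrow> z \<in> V" using so unfolding scott_open_def by blast
      have sc: "\<And>T t. vb_directed T \<Longrightarrow> is_lub_in UNIV T t \<Longrightarrow> t \<in> V \<Longrightarrow> T \<inter> V \<noteq> {}"
        using so unfolding scott_open_def by blast
      have "\<forall>h\<in>S. \<exists>J\<in>Idl \<Omega>. {y \<in> hat_pts \<Omega>. h y \<in> V} = hatO \<Omega> J"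
        using S so unfolding fun_space_def hat_cont_def by blast
      then obtain Jf where Jf: "\<And>h. h \<in> S \<Longrightarrow> Jf h \<in> Idl \<Omega> \<and> {y \<in> hat_pts \<Omega>. h y \<in> V} = hatO \<Omega> (Jf h)"
        by metis
      have JS: "Jf ` S \<subseteq> Idl \<Omega>" using Jf by blast
      have "{y \<in> hat_pts \<Omega>. p y \<in> V} = (\<Union>h\<in>S. {y \<in> hat_pts \<Omega>. h y \<in> V})"
      proof
        show "{y \<in> hat_pts \<Omega>. p y \<in> V} \<subseteq> (\<Union>h\<in>S. {y \<in> hat_pts \<Omega>. h y \<in> V})"
        proof
          fix y assume "y \<in> {y \<in> hat_pts \<Omega>. p y \<in> V}"
          then have y: "y \<in> hat_pts \<Omega>" "p y \<in> V" by blast+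
          have "(\<lambda>h. h y) ` S \<inter> V \<noteq> {}" using sc[OF dirY lubY y(2)] .
          then show "y \<in> (\<Union>h\<in>S. {y \<in> hat_pts \<Omega>. h y \<in> V})" using y(1) by blast
        qed
        show "(\<Union>h\<in>S. {y \<in> hat_pts \<Omega>. h y \<in> V}) \<subseteq> {y \<in> hat_pts \<Omega>. p y \<in> V}"
        proof
          fix y assume "y \<in> (\<Union>h\<in>S. {y \<in> hat_pts \<Omega>. h y \<in> V})"
          then obtain h where h: "h \<in> S" "y \<in> hat_pts \<Omega>" "h y \<in> V" by blast
          have "h y \<le> p y" using lubD(2)[OF lubY] h(1) by blast
          then show "y \<in> {y \<in> hat_pts \<Omega>. p y \<in> V}" using up[OF h(3)] h(2) by blast
        qed
      qed
      also have "\<dots> = \<Union>(hatO \<Omega> ` (Jf ` S))" using Jf by auto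
      also have "\<dots> = hatO \<Omega> (gen \<Omega> (Jf ` S))" using hatO_gen[OF vb JS] by simp
      finally show "\<exists>J\<in>Idl \<Omega>. {y \<in> hat_pts \<Omega>. p y \<in> V} = hatO \<Omega> J"
        using gen_Idl[OF vb JS] by blast
    qed
  qed
  have "s = p" if s: "is_lub_in (fun_space \<Omega>) S s" for s
  proof (rule order.antisym)
    have "h \<le> p" if "h \<in> S" for h using lubD(2)[OF lubY] that by (auto intro: le_funI)
    then show "s \<le> p" using lubD(3)[OF s pfs] by blast
    show "p \<le> s"
    proof (rule le_funI)
      fix y
      have "h y \<le> s y" if "h \<in> S" for h using lubD(2)[OF s that] by (rule le_funD)
      then show "p y \<le> s y" using lubD(3)[OF lubY] by blast
    qed
  qed
  then show ?thesis using dirY lubY pfs by blast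
qed


theorem mainTheorem17:
  fixes X :: "'a topology" and \<Omega>0 :: "'a set set"
    and D0 :: "'d::order_bot set"
    and I :: "'i set" and W :: "'i \<Rightarrow> 'a set" and b :: "'i \<Rightarrow> 'd"
    and J :: "'j set" and W' :: "'j \<Rightarrow> 'a set" and b' :: "'j \<Rightarrow> 'd"
    and f g :: "'a set set set \<Rightarrow> 'd"
  assumes "viable_base X \<Omega>0"
    and "bc_domain_with_basis D0"
    and "finite I" and "\<forall>i\<in>I. W i \<in> \<Omega>0 \<and> b i \<in> D0" and "consistent_family \<Omega>0 I W b"
    and "finite J" and "\<forall>j\<in>J. W' j \<in> \<Omega>0 \<and> b' j \<in> D0" and "consistent_family \<Omega>0 J W' b'"
    and "f = step_join \<Omega>0 I W b"
    and "g = step_join \<Omega>0 J W' b'"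
  shows "(\<forall>i\<in>I. \<exists>U\<in>\<Omega>0. hatO \<Omega>0 (vb_down \<Omega>0 U) =
                        {y \<in> hat_pts \<Omega>0. way_below_in UNIV (b i) (g y)})
         \<and> (\<forall>U. (\<forall>i\<in>I. U i \<in> \<Omega>0 \<and> hatO \<Omega>0 (vb_down \<Omega>0 (U i)) =
                        {y \<in> hat_pts \<Omega>0. way_below_in UNIV (b i) (g y)}) \<longrightarrow>
               (way_below_in (fun_space \<Omega>0) f g \<longleftrightarrow> (\<forall>i\<in>I. W i \<subseteq> U i)))"
proof -
  note vb = assms(1) and bc = assms(2) and finI = assms(3) and consI = assms(5)
    and finJ = assms(6) and consJ = assms(8) and fdef = assms(9) and gdef = assms(10)
  have WI: "\<forall>i\<in>I. W i \<in> \<Omega>0" using assms(4) by blast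
  have WJ: "\<forall>j\<in>J. W' j \<in> \<Omega>0" using assms(7) by blast
  have ffs: "f \<in> fun_space \<Omega>0" unfolding fdef by (rule step_fs[OF vb bc finI WI consI])
  have gfs: "g \<in> fun_space \<Omega>0" unfolding gdef by (rule step_fs[OF vb bc finJ WJ consJ])
  have part1: "\<forall>i\<in>I. \<exists>U\<in>\<Omega>0. hatO \<Omega>0 (vb_down \<Omega>0 U) =
                        {y \<in> hat_pts \<Omega>0. way_below_in UNIV (b i) (g y)}"
  proof
    fix i assume "i \<in> I"
    have up: "\<forall>x\<in>{d. way_below_in UNIV (b i) d}. \<forall>z. x \<le> z \<longrightarrow> z \<in> {d. way_below_in UNIV (b i) d}"
      using wb_mono[OF order.refl] by blast
    obtain U where "U \<in> \<Omega>0" "{y \<in> hat_pts \<Omega>0. step_join \<Omega>0 J W' b' y \<in> {d. way_below_in UNIV (b i) d}}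
        = hatO \<Omega>0 (vb_down \<Omega>0 U)"
      using step_preimage[OF vb bc finJ WJ consJ up] by blast
    then show "\<exists>U\<in>\<Omega>0. hatO \<Omega>0 (vb_down \<Omega>0 U) = {y \<in> hat_pts \<Omega>0. way_below_in UNIV (b i) (g y)}"
      unfolding gdef by auto
  qed
  have part2: "way_below_in (fun_space \<Omega>0) f g \<longleftrightarrow> (\<forall>i\<in>I. W i \<subseteq> U i)"
    if HU: "\<forall>i\<in>I. U i \<in> \<Omega>0 \<and> hatO \<Omega>0 (vb_down \<Omega>0 (U i)) =
                        {y \<in> hat_pts \<Omega>0. way_below_in UNIV (b i) (g y)}" for U
  proof
    assume wb: "way_below_in (fun_space \<Omega>0) f g"
    define Ap where "Ap j = {c \<in> D0. way_below_in UNIV c (b' j)}" for j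
    have Apd: "vb_directed (Ap j)" "is_lub_in UNIV (Ap j) (b' j)" for j unfolding Ap_def using bcD(2,3)[OF bc] by blast+
    define C where "C = {c. \<forall>j\<in>J. c j \<in> Ap j}"
    define c0 where "c0 j = (SOME c. c \<in> Ap j)" for j
    have c0: "c0 j \<in> Ap j" for j
    proof -
      have "Ap j \<noteq> {}" using Apd(1) unfolding vb_directed_def by blast
      then have "\<exists>c. c \<in> Ap j" by blast
      then show ?thesis unfolding c0_def by (rule someI_ex)
    qed
    have c0C: "c0 \<in> C" unfolding C_def using c0 by blast
    have Cle: "\<forall>j\<in>J. c j \<le> b' j" if "c \<in> C" for c
      using that wb_le unfolding C_def Ap_def by blast
    have consC: "consistent_family \<Omega>0 J W' c" if "c \<in> C" for c using cons_mono[OF consJ Cle[OF that]] .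
    define S where "S = (\<lambda>c. step_join \<Omega>0 J W' c) ` C"
    have Sfs: "S \<subseteq> fun_space \<Omega>0" unfolding S_def using step_fs[OF vb bc finJ WJ consC] by blast
    have dirS: "vb_directed S" unfolding vb_directed_def
    proof (intro conjI ballI)
      show "S \<noteq> {}" unfolding S_def using c0C by blast
      fix h1 h2 assume "h1 \<in> S" "h2 \<in> S"
      then obtain c1 c2 where c12: "c1 \<in> C" "c2 \<in> C" "h1 = step_join \<Omega>0 J W' c1" "h2 = step_join \<Omega>0 J W' c2"
        unfolding S_def by blast
      define c3 where "c3 j = (SOME c. c \<in> Ap j \<and> c1 j \<le> c \<and> c2 j \<le> c)" for j
      have c3: "c3 j \<in> Ap j \<and> c1 j \<le> c3 j \<and> c2 j \<le> c3 j" if "j \<in> J" for j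
      proof -
        have "c1 j \<in> Ap j" "c2 j \<in> Ap j" using c12(1,2) that unfolding C_def by blast+
        then have "\<exists>c. c \<in> Ap j \<and> c1 j \<le> c \<and> c2 j \<le> c" using Apd(1)[of j] unfolding vb_directed_def by blast
        then show ?thesis unfolding c3_def by (rule someI_ex)
      qed
      have c3C: "c3 \<in> C" unfolding C_def using c3 by blast
      have "h1 \<le> step_join \<Omega>0 J W' c3" unfolding c12(3)
        by (rule step_mono[OF bc consC[OF c12(1)] consC[OF c3C]]) (use c3 in blast)
      moreover have "h2 \<le> step_join \<Omega>0 J W' c3" unfolding c12(4)
        by (rule step_mono[OF bc consC[OF c12(2)] consC[OF c3C]]) (use c3 in blast)
      moreover have "step_join \<Omega>0 J W' c3 \<in> S" unfolding S_def using c3C by blast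
      ultimately show "\<exists>z\<in>S. h1 \<le> z \<and> h2 \<le> z" by blast
    qed
    have lubS: "is_lub_in (fun_space \<Omega>0) S g"
    proof (rule lubI)
      show "g \<in> fun_space \<Omega>0" by (rule gfs)
      show "h \<le> g" if "h \<in> S" for h
      proof -
        obtain c where c: "c \<in> C" "h = step_join \<Omega>0 J W' c" using \<open>h \<in> S\<close> unfolding S_def by blast
        show ?thesis unfolding c(2) gdef by (rule step_mono[OF bc consC[OF c(1)] consJ Cle[OF c(1)]])
      qed
      show "g \<le> u" if hu: "u \<in> fun_space \<Omega>0" "\<And>h. h \<in> S \<Longrightarrow> h \<le> u" for u
      proof (rule le_funI)
        fix y
        show "g y \<le> u y"
        proof (cases "y \<in> hat_pts \<Omega>0")
          case False then show ?thesis unfolding gdef using step_out[OF False, of J W' b'] by simp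
        next
          case True
          have "a \<le> u y" if ha: "a \<in> b' ` act \<Omega>0 J W' y" for a
          proof -
            obtain j where j: "j \<in> J" "y \<in> hatO \<Omega>0 (vb_down \<Omega>0 (W' j))" "a = b' j"
              using ha unfolding act_def by blast
            have "e \<le> u y" if he: "e \<in> Ap j" for e
            proof -
              define c' where "c' = c0(j := e)"
              have c'C: "c' \<in> C" unfolding C_def c'_def using c0 he by auto
              have "c' j \<le> step_join \<Omega>0 J W' c' y" by (rule step_ge[OF bc consC[OF c'C] j(1,2)])
              moreover have "step_join \<Omega>0 J W' c' \<le> u" using hu(2) c'C unfolding S_def by blast
              ultimately show ?thesis unfolding c'_def by (auto dest: le_funD intro: order.trans)
            qed
            then show ?thesis using lubD(3)[OF Apd(2)[of j]] j(3) by blast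
          qed
          then show ?thesis unfolding gdef using lubD(3)[OF step_lub[OF bc consJ]] by blast
        qed
      qed
    qed
    obtain d where d: "d \<in> S" "f \<le> d" using wbD[OF wb Sfs dirS lubS order.refl] by blast
    then obtain c where c: "c \<in> C" "d = step_join \<Omega>0 J W' c" unfolding S_def by blast
    show "\<forall>i\<in>I. W i \<subseteq> U i"
    proof
      fix i assume i: "i \<in> I"
      have "hatO \<Omega>0 (vb_down \<Omega>0 (W i)) \<subseteq> hatO \<Omega>0 (vb_down \<Omega>0 (U i))"
      proof
        fix y assume y: "y \<in> hatO \<Omega>0 (vb_down \<Omega>0 (W i))"
        then have yp: "y \<in> hat_pts \<Omega>0" unfolding hatO_def by blast
        have "b i \<le> f y" unfolding fdef by (rule step_ge[OF bc consI i y])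
        also have "f y \<le> d y" using d(2) by (rule le_funD)
        finally have bi: "b i \<le> d y" .
        have fin: "finite (c ` act \<Omega>0 J W' y)" using finJ unfolding act_def by simp
        have "way_below_in UNIV a (g y)" if ha: "a \<in> c ` act \<Omega>0 J W' y" for a
        proof -
          obtain j where j: "j \<in> J" "y \<in> hatO \<Omega>0 (vb_down \<Omega>0 (W' j))" "a = c j"
            using ha unfolding act_def by blast
          have "way_below_in UNIV (c j) (b' j)" using c(1) j(1) unfolding C_def Ap_def by blast
          moreover have "b' j \<le> g y" unfolding gdef by (rule step_ge[OF bc consJ j(1,2)])
          ultimately show ?thesis using wb_mono[OF order.refl] j(3) by blast
        qed
        then have "way_below_in UNIV (d y) (g y)" unfolding c(2)
          using wb_fin_lub[OF fin _ step_lub[OF bc consC[OF c(1)]]] by blast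
        then have "way_below_in UNIV (b i) (g y)" using wb_mono[OF bi _ order.refl] by blast
        then show "y \<in> hatO \<Omega>0 (vb_down \<Omega>0 (U i))" using HU i yp by blast
      qed
      then show "W i \<subseteq> U i" using O_down_sub_imp[OF vb _ _] WI HU i by blast
    qed
  next
    assume HW: "\<forall>i\<in>I. W i \<subseteq> U i"
    show "way_below_in (fun_space \<Omega>0) f g" unfolding way_below_in_def
    proof (intro conjI allI impI)
      show "f \<in> fun_space \<Omega>0" by (rule ffs)
      show "g \<in> fun_space \<Omega>0" by (rule gfs)
      fix S s assume Sfs: "S \<subseteq> fun_space \<Omega>0" and dirS: "vb_directed S"
        and lubS: "is_lub_in (fun_space \<Omega>0) S s" and gs: "g \<le> s"
      obtain p where p: "\<And>y. vb_directed ((\<lambda>h. h y) ` S)" "\<And>y. is_lub_in UNIV ((\<lambda>h. h y) ` S) (p y)"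
        "p \<in> fun_space \<Omega>0" "\<And>s. is_lub_in (fun_space \<Omega>0) S s \<Longrightarrow> s = p"
        using ptwise[OF vb bc Sfs dirS] by blast
      have sp: "s = p" using p(4)[OF lubS] .
      have Sne: "S \<noteq> {}" using dirS unfolding vb_directed_def by blast
      have claim: "\<exists>h\<in>S. \<forall>y\<in>hatO \<Omega>0 (vb_down \<Omega>0 (W i)). b i \<le> h y" if i: "i \<in> I" for i
      proof -
        define K where "K = {V \<in> \<Omega>0. \<exists>h\<in>S. \<forall>y\<in>hatO \<Omega>0 (vb_down \<Omega>0 V). b i \<le> h y}"
        have KI: "K \<in> Idl \<Omega>0"
        proof (rule IdlI)
          show "K \<subseteq> \<Omega>0" unfolding K_def by blast
          show "{} \<in> K" unfolding K_def using vbD(1)[OF vb] O_down_empty[OF vb] Sne by blast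
          show "V \<in> K" if h: "A \<in> K" "V \<in> \<Omega>0" "V \<subseteq> A" for A V
          proof -
            obtain hh where hh: "hh \<in> S" "\<forall>y\<in>hatO \<Omega>0 (vb_down \<Omega>0 A). b i \<le> hh y" "A \<in> \<Omega>0"
              using h(1) unfolding K_def by blast
            have "hatO \<Omega>0 (vb_down \<Omega>0 V) \<subseteq> hatO \<Omega>0 (vb_down \<Omega>0 A)" using O_down_mono[OF vb h(3) hh(3)] .
            then show ?thesis unfolding K_def using hh h(2) by blast
          qed
          show "\<exists>Z\<in>K. A \<subseteq> Z \<and> B \<subseteq> Z" if h: "A \<in> K" "B \<in> K" for A B
          proof -
            obtain h1 where h1: "h1 \<in> S" "\<forall>y\<in>hatO \<Omega>0 (vb_down \<Omega>0 A). b i \<le> h1 y" "A \<in> \<Omega>0"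
              using h(1) unfolding K_def by blast
            obtain h2 where h2: "h2 \<in> S" "\<forall>y\<in>hatO \<Omega>0 (vb_down \<Omega>0 B). b i \<le> h2 y" "B \<in> \<Omega>0"
              using h(2) unfolding K_def by blast
            obtain h3 where h3: "h3 \<in> S" "h1 \<le> h3" "h2 \<le> h3" using dirS h1(1) h2(1) unfolding vb_directed_def by blast
            have "\<forall>y\<in>hatO \<Omega>0 (vb_down \<Omega>0 (A \<union> B)). b i \<le> h3 y"
            proof
              fix y assume "y \<in> hatO \<Omega>0 (vb_down \<Omega>0 (A \<union> B))"
              then have "y \<in> hatO \<Omega>0 (vb_down \<Omega>0 A) \<or> y \<in> hatO \<Omega>0 (vb_down \<Omega>0 B)"
                unfolding O_down_Un[OF vb h1(3) h2(3)] by blast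
              moreover have "h1 y \<le> h3 y" "h2 y \<le> h3 y" using h3(2,3) by (auto dest: le_funD)
              ultimately show "b i \<le> h3 y" using h1(2) h2(2) by (meson order.trans)
            qed
            moreover have "A \<union> B \<in> \<Omega>0" using vbD(3)[OF vb h1(3) h2(3)] .
            ultimately have "A \<union> B \<in> K" unfolding K_def using h3(1) by blast
            then show ?thesis by blast
          qed
        qed
        have WiO: "W i \<in> \<Omega>0" using WI i by blast
        have "W i \<in> K"
        proof (rule ccontr)
          assume "W i \<notin> K"
          then obtain P where P: "prime_filt \<Omega>0 P" "W i \<in> P" "P \<inter> K = {}"
            using prime_exists[OF vb WiO KI] by blast
          define y0 where "y0 = ptof \<Omega>0 P"
          have y0p: "y0 \<in> hat_pts \<Omega>0" unfolding y0_def by (rule ptof_pt[OF vb P(1)])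
          have "y0 \<in> hatO \<Omega>0 (vb_down \<Omega>0 (W i))" unfolding y0_def using ptof_O_down[OF WiO P(1) vb] P(2) by blast
          moreover have "hatO \<Omega>0 (vb_down \<Omega>0 (W i)) \<subseteq> hatO \<Omega>0 (vb_down \<Omega>0 (U i))"
            using O_down_mono[OF vb] HW HU i by blast
          ultimately have "y0 \<in> hatO \<Omega>0 (vb_down \<Omega>0 (U i))" by blast
          then have "way_below_in UNIV (b i) (g y0)" using HU i by blast
          moreover have "g y0 \<le> p y0" using gs sp by (auto dest: le_funD)
          ultimately have "way_below_in UNIV (b i) (p y0)" using wb_mono[OF order.refl] by blast
          then obtain cc where cc: "way_below_in UNIV (b i) cc" "way_below_in UNIV cc (p y0)"
            using interp[OF bc] by blast
          obtain hv where hv: "hv \<in> (\<lambda>h. h y0) ` S" "cc \<le> hv" using wbD[OF cc(2) _ p(1) p(2) order.refl] by blast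
          then obtain h where h: "h \<in> S" "cc \<le> h y0" by blast
          have bh: "way_below_in UNIV (b i) (h y0)" using wb_mono[OF order.refl cc(1) h(2)] .
          have "hat_cont \<Omega>0 h" using Sfs h(1) unfolding fun_space_def by blast
          then obtain JJ where JJ: "JJ \<in> Idl \<Omega>0" "{y \<in> hat_pts \<Omega>0. h y \<in> {d. way_below_in UNIV (b i) d}} = hatO \<Omega>0 JJ"
            using wb_open[OF bc, of "b i"] unfolding hat_cont_def by blast
          have "y0 \<in> hatO \<Omega>0 JJ" using JJ(2) y0p bh by blast
          then have "JJ \<in> ptof \<Omega>0 P" unfolding hatO_def y0_def by blast
          then obtain V0 where V0: "V0 \<in> JJ" "V0 \<in> P" unfolding ptof_def by blast
          have V0O: "V0 \<in> \<Omega>0" using V0(1) Idl_sub[OF JJ(1)] by blast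
          have "vb_down \<Omega>0 V0 \<subseteq> JJ" unfolding vb_down_def using Idl_down[OF JJ(1) V0(1)] by blast
          then have "hatO \<Omega>0 (vb_down \<Omega>0 V0) \<subseteq> hatO \<Omega>0 JJ" using hatO_mono JJ(1) by blast
          then have "\<forall>y\<in>hatO \<Omega>0 (vb_down \<Omega>0 V0). b i \<le> h y" using JJ(2) wb_le by blast
          then have "V0 \<in> K" unfolding K_def using V0O h(1) by blast
          then show False using V0(2) P(3) by blast
        qed
        then show ?thesis unfolding K_def by blast
      qed
      then obtain hf where hf: "\<And>i. i \<in> I \<Longrightarrow> hf i \<in> S \<and> (\<forall>y\<in>hatO \<Omega>0 (vb_down \<Omega>0 (W i)). b i \<le> hf i y)"
        by metis
      have "finite (hf ` I)" "hf ` I \<subseteq> S" using finI hf by auto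
      then obtain d where d: "d \<in> S" "\<forall>e\<in>hf ` I. e \<le> d" using dir_fin[OF dirS] by blast
      have "f \<le> d"
      proof (rule le_funI)
        fix y
        show "f y \<le> d y"
        proof (cases "y \<in> hat_pts \<Omega>0")
          case False
          have "f y = bot" unfolding fdef using step_out[OF False, of I W b] .
          then show ?thesis by simp
        next
          case True
          have "a \<le> d y" if ha: "a \<in> b ` act \<Omega>0 I W y" for a
          proof -
            obtain i where i: "i \<in> I" "y \<in> hatO \<Omega>0 (vb_down \<Omega>0 (W i))" "a = b i"
              using ha unfolding act_def by blast
            have "b i \<le> hf i y" using hf[OF i(1)] i(2) by blast
            moreover have "hf i y \<le> d y" using d(2) i(1) by (auto dest: le_funD)
            ultimately show ?thesis using i(3) by (meson order.trans)
          qed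
          then show ?thesis unfolding fdef using lubD(3)[OF step_lub[OF bc consI]] by blast
        qed
      qed
      then show "\<exists>d\<in>S. f \<le> d" using d(1) by blast
    qed
  qed
  show ?thesis using part1 part2 by blast
qed

end
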